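(* For every permutation $\sigma\in\mathfrak S_{m+n}$, $$\mathrm{Ber}^{\mathbf s_{m|n}^\sigma}\big(1+u\,\mathcal T_{m|n}^\sigma\big)=\mathrm{Ber}^{\mathbf s_{m|n}}\big(1+u\,\mathcal T_{m|n}\big).$$
   Context: Fix integers $m\ge1$, $n\ge0$. $I_{m|n}=\{1,\dots,m\}\cup\{\tfrac12,\dots,n-\tfrac12\}$, ordered $1<\dots<m<\tfrac12<\dots<n-\tfrac12$, parity $|i|=2i\bmod2$; $\pi:\{1,\dots,m+n\}\to I_{m|n}$ the order-preserving bijection. $\mathfrak{gl}_{m|n}$ has homogeneous basis $E_{i,j}$ of parity $|i|+|j|$. $A[r]=A\otimes t^r\in\mathfrak{gl}_{m|n}[t,t^{-1}]$, $\mathcal U_-=U(t^{-1}\mathfrak{gl}_{m|n}[t^{-1}])$, $\tau=-\partial_t$ even with $[\tau,A[-r]]=rA[-r-1]$, $u$ an even formal variable; $\mathcal T_{m|n}=[\delta_{i,j}\tau+(-1)^{2\pi(i)}E_{\pi(i),\pi(j)}[-1]]_{i,j=1}^{m+n}$, and $1+u\mathcal T_{m|n}$ is a matrix over $\mathcal U_-[\tau][[u]]$. For a 0-1 sequence $\mathbf s=(s_1,\dots,s_{m+n})$ with $m$ zeros and $n$ ones and a matrix $X=[x_{ij}]$ with $x_{ij}$ homogeneous of parity $s_i+s_j$ all of whose principal quasiminors are defined, $\mathrm{Ber}^{\mathbf s}X=d_1(X)^{(-1)^{s_1}}\cdots d_{m+n}(X)^{(-1)^{s_{m+n}}}$, where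 $d_i(X)$ is the inverse of the $(i,i)$ entry of the inverse of the top-left $i\times i$ submatrix. $\mathbf s_{m|n}=(0^m,1^n)$. For $\sigma\in\mathfrak S_{m+n}$: $\mathbf s^\sigma=(s_{\sigma^{-1}(1)},\dots,s_{\sigma^{-1}(m+n)})$ and $X^\sigma=[x_{\sigma^{-1}(i),\sigma^{-1}(j)}]$. *)

theory Defs
  imports "HOL-Computational_Algebra.Formal_Power_Series" "HOL-Combinatorics.Permutations"
begin

text \<open>Indices are 0-based: index i in {0..<m+n} stands for pi(i+1) in I_{m|n}.
  The parity of index i (equivalently 2 pi(i+1) mod 2) is 0 for i < m and 1 otherwise;
  this is also the sequence s_{m|n}.\<close>

definition par :: "nat \<Rightarrow> nat \<Rightarrow> nat" where
  "par m i = (if i < m then 0 else 1)"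

definition rinv :: "'a::ring_1 \<Rightarrow> 'a" where
  "rinv x = (THE y. x * y = 1 \<and> y * x = 1)"

text \<open>Square k x k matrices as functions nat => nat => 'a (entries outside range ignored).\<close>
definition mmult :: "nat \<Rightarrow> (nat \<Rightarrow> nat \<Rightarrow> 'a::ring_1) \<Rightarrow> (nat \<Rightarrow> nat \<Rightarrow> 'a) \<Rightarrow> nat \<Rightarrow> nat \<Rightarrow> 'a" where
  "mmult k X Y = (\<lambda>i j. \<Sum>l<k. X i l * Y l j)"

definition mat_inv :: "nat \<Rightarrow> (nat \<Rightarrow> nat \<Rightarrow> 'a::ring_1) \<Rightarrow> nat \<Rightarrow> nat \<Rightarrow> 'a" where
  "mat_inv k X = (THE Y. (\<forall>i j. (k \<le> i \<or> k \<le> j) \<longrightarrow> Y i j = 0) \<and>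
      (\<forall>i<k. \<forall>j<k. mmult k X Y i j = (if i = j then 1 else 0)) \<and>
      (\<forall>i<k. \<forall>j<k. mmult k Y X i j = (if i = j then 1 else 0)))"

text \<open>Principal quasiminor d_i(X), i = 1..N: inverse of the (i,i) entry of the inverse of the
  top-left i x i submatrix (0-based entry (i-1,i-1)).\<close>
definition qminor :: "nat \<Rightarrow> (nat \<Rightarrow> nat \<Rightarrow> 'a::ring_1) \<Rightarrow> 'a" where
  "qminor i X = rinv (mat_inv i X (i - 1) (i - 1))"

definition Ber :: "nat \<Rightarrow> (nat \<Rightarrow> nat) \<Rightarrow> (nat \<Rightarrow> nat \<Rightarrow> 'a::ring_1) \<Rightarrow> 'a" where
  "Ber N s X = prod_list (map (\<lambda>i. if s i = 0 then qminor (Suc i) X else rinv (qminor (Suc i) X)) [0..<N])"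

text \<open>Generators of U_-[tau]: e i j r stands for E_{pi(i+1),pi(j+1)}[-r] (r >= 1), tau for tau.
  gen_rels states the defining relations of U(t^{-1} gl_{m|n}[t^{-1}])[tau]:
  the supercommutator relations of the loop Lie superalgebra and [tau, A[-r]] = r A[-r-1].\<close>
definition gen_rels :: "nat \<Rightarrow> nat \<Rightarrow> (nat \<Rightarrow> nat \<Rightarrow> nat \<Rightarrow> 'a::ring_1) \<Rightarrow> 'a \<Rightarrow> bool" where
  "gen_rels m n e tau \<longleftrightarrow>
     (\<forall>i<m+n. \<forall>j<m+n. \<forall>k<m+n. \<forall>l<m+n. \<forall>r\<ge>1. \<forall>s\<ge>1.
        e i j r * e k l s
          - (-1) ^ ((par m i + par m j) * (par m k + par m l)) * (e k l s * e i j r)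
        = (if j = k then e i l (r + s) else 0)
          - (-1) ^ ((par m i + par m j) * (par m k + par m l)) * (if l = i then e k j (r + s) else 0))
   \<and> (\<forall>i<m+n. \<forall>j<m+n. \<forall>r\<ge>1. tau * e i j r - e i j r * tau = of_nat r * e i j (r + 1))"

text \<open>The matrix 1 + u T_{m|n} over A[[u]], with
  T_{ij} = delta_{ij} tau + (-1)^{2 pi(i)} E_{pi(i),pi(j)}[-1].\<close>
definition oneuT :: "nat \<Rightarrow> (nat \<Rightarrow> nat \<Rightarrow> nat \<Rightarrow> 'a::ring_1) \<Rightarrow> 'a \<Rightarrow> nat \<Rightarrow> nat \<Rightarrow> 'a fps" where
  "oneuT m e tau = (\<lambda>i j. Abs_fps (\<lambda>d.
      if d = 0 then (if i = j then 1 else 0)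
      else if d = 1 then (if i = j then tau else 0) + (-1) ^ par m i * e i j 1
      else 0))"

end

theory Submission
  imports Defs
begin


definition mm :: "'i set \<Rightarrow> ('i \<Rightarrow> 'i \<Rightarrow> 'r::semiring_0) \<Rightarrow> ('i \<Rightarrow> 'i \<Rightarrow> 'r) \<Rightarrow> 'i \<Rightarrow> 'i \<Rightarrow> 'r" where
  "mm I A B = (\<lambda>x z. \<Sum>y\<in>I. A x y * B y z)"

definition idm :: "'i set \<Rightarrow> 'i \<Rightarrow> 'i \<Rightarrow> 'r::{zero,one}" where
  "idm I = (\<lambda>x z. if x \<in> I \<and> x = z then 1 else 0)"

definition rst :: "'i set \<Rightarrow> ('i \<Rightarrow> 'i \<Rightarrow> 'r::zero) \<Rightarrow> bool" where
  "rst I A \<longleftrightarrow> (\<forall>x z. x \<notin> I \<or> z \<notin> I \<longrightarrow> A x z = 0)"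

lemma mm_assoc:
  assumes "finite I"
  shows "mm I (mm I A B) C = mm I A (mm I B C)"
  unfolding mm_def
  by (auto simp: sum_distrib_left sum_distrib_right mult.assoc intro!: ext sum.swap)

lemma mm_add_left: "mm I (\<lambda>x z. A x z + B x z) C = (\<lambda>x z. mm I A C x z + mm I B C x z)"
  unfolding mm_def by (auto simp: distrib_right sum.distrib)

lemma mm_add_right: "mm I C (\<lambda>x z. A x z + B x z) = (\<lambda>x z. mm I C A x z + mm I C B x z)"
  unfolding mm_def by (auto simp: distrib_left sum.distrib)

lemma mm_diff_left: "mm I (\<lambda>x z. A x z - B x z) (C::'i\<Rightarrow>'i\<Rightarrow>'r::ring) = (\<lambda>x z. mm I A C x z - mm I B C x z)"
  unfolding mm_def by (auto simp: left_diff_distrib sum_subtractf)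

lemma mm_diff_right: "mm I (C::'i\<Rightarrow>'i\<Rightarrow>'r::ring) (\<lambda>x z. A x z - B x z) = (\<lambda>x z. mm I C A x z - mm I C B x z)"
  unfolding mm_def by (auto simp: right_diff_distrib sum_subtractf)

lemma if01_mult[simp]: "(if P then 1 else 0) * (b::'r::semiring_1) = (if P then b else 0)"
  by simp
lemma mult_if01[simp]: "(b::'r::semiring_1) * (if P then 1 else 0) = (if P then b else 0)"
  by simp

lemma mm_idm_left: "finite I \<Longrightarrow> rst I B \<Longrightarrow> mm I (idm I) B = (B::'i\<Rightarrow>'i\<Rightarrow>'r::semiring_1)"
  unfolding mm_def idm_def rst_def
proof (intro ext)
  fix x z assume "finite I" "\<forall>x z. x \<notin> I \<or> z \<notin> I \<longrightarrow> B x z = 0"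
  thus "(\<Sum>y\<in>I. (if x \<in> I \<and> x = y then 1 else 0) * B y z) = B x z"
    by (cases "x \<in> I") (auto simp: sum.delta)
qed

lemma mm_idm_right: "finite I \<Longrightarrow> rst I A \<Longrightarrow> mm I A (idm I) = (A::'i\<Rightarrow>'i\<Rightarrow>'r::semiring_1)"
  unfolding mm_def idm_def rst_def
proof (intro ext)
  fix x z assume "finite I" "\<forall>x z. x \<notin> I \<or> z \<notin> I \<longrightarrow> A x z = 0"
  thus "(\<Sum>y\<in>I. A x y * (if y \<in> I \<and> y = z then 1 else 0)) = A x z"
    by (cases "z \<in> I") (auto simp: sum.delta')
qed

lemma rst_mm: "rst I A \<Longrightarrow> rst I B \<Longrightarrow> rst I (mm I A B)"
  unfolding mm_def rst_def by auto

lemma rst_idm: "rst I (idm I)" unfolding rst_def idm_def by auto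

lemma uadic:
  fixes Z H :: "'i \<Rightarrow> 'i \<Rightarrow> 'a::real_algebra_1 fps"
  assumes fin: "finite I" and c: "c \<noteq> 0"
    and H0: "\<And>x y. x \<in> I \<Longrightarrow> y \<in> I \<Longrightarrow> fps_nth (H x y) 0 = 0"
    and eq: "\<And>x. x \<in> I \<Longrightarrow> fps_const (of_real c) * Z x z + (\<Sum>y\<in>I. H x y * Z y z) = 0"
  shows "\<forall>x\<in>I. Z x z = 0"
proof -
  have "\<forall>x\<in>I. fps_nth (Z x z) d = 0" for d
  proof (induction d rule: less_induct)
    case (less d)
    show ?case
    proof
      fix x assume x: "x \<in> I"
      have "fps_nth (fps_const (of_real c) * Z x z + (\<Sum>y\<in>I. H x y * Z y z)) d = 0"
        using eq[OF x] by simp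
      moreover have "fps_nth (\<Sum>y\<in>I. H x y * Z y z) d = 0"
      proof -
        have "fps_nth (H x y * Z y z) d = 0" if y: "y \<in> I" for y
        proof -
          have "fps_nth (H x y * Z y z) d = (\<Sum>i=0..d. fps_nth (H x y) i * fps_nth (Z y z) (d - i))"
            by (simp add: fps_mult_nth)
          also have "\<dots> = 0"
          proof (rule sum.neutral, rule ballI)
            fix i assume i: "i \<in> {0..d}"
            show "fps_nth (H x y) i * fps_nth (Z y z) (d - i) = 0"
            proof (cases "i = 0")
              case True thus ?thesis using H0[OF x y] by simp
            next
              case False
              hence "d - i < d" using i by auto
              hence "fps_nth (Z y z) (d - i) = 0" using less y by blast
              thus ?thesis by simp
            qed
          qed
          finally show ?thesis .
        qed
        thus ?thesis by (simp add: fps_sum_nth)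
      qed
      ultimately have "of_real c * fps_nth (Z x z) d = 0" by simp
      hence "c *\<^sub>R fps_nth (Z x z) d = 0" by (simp add: scaleR_conv_of_real)
      thus "fps_nth (Z x z) d = 0" using c by simp
    qed
  qed
  thus ?thesis by (auto simp: fps_eq_iff)
qed


definition UNI :: "'i set \<Rightarrow> ('i \<Rightarrow> 'i \<Rightarrow> 'a::ring_1 fps) \<Rightarrow> bool" where
  "UNI I X \<longleftrightarrow> (\<forall>i\<in>I. \<forall>j\<in>I. fps_nth (X i j) 0 = (if i = j then 1 else 0))"

function ric :: "'i set \<Rightarrow> ('i \<Rightarrow> 'i \<Rightarrow> 'a::ring_1 fps) \<Rightarrow> nat \<Rightarrow> 'i \<Rightarrow> 'i \<Rightarrow> 'a" where
  "ric I X d i j = (if d = 0 then (if i = j then 1 else 0)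
     else - (\<Sum>l\<in>I. \<Sum>e\<in>{1..d}. fps_nth (X i l) e * ric I X (d - e) l j))"
  by pat_completeness auto
termination by (relation "measure (\<lambda>(I,X,d,i,j). d)") auto

declare ric.simps[simp del]

definition rinvm :: "'i set \<Rightarrow> ('i \<Rightarrow> 'i \<Rightarrow> 'a::ring_1 fps) \<Rightarrow> 'i \<Rightarrow> 'i \<Rightarrow> 'a fps" where
  "rinvm I X = (\<lambda>i j. if i \<in> I \<and> j \<in> I then Abs_fps (\<lambda>d. ric I X d i j) else 0)"

lemma fps_nth_sum: "fps_nth (\<Sum>x\<in>A. f x) n = (\<Sum>x\<in>A. fps_nth (f x) n)"
  by (simp add: fps_sum_nth)

lemma rinvm_right:
  assumes fin: "finite I" and U: "UNI I X" and i: "i \<in> I" and j: "j \<in> I"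
  shows "mm I X (rinvm I X) i j = idm I i j"
proof (rule fps_ext)
  fix d
  let ?N = "rinvm I X"
  have "fps_nth (mm I X ?N i j) d = (\<Sum>l\<in>I. \<Sum>e=0..d. fps_nth (X i l) e * fps_nth (?N l j) (d - e))"
    by (simp add: mm_def fps_nth_sum fps_mult_nth)
  also have "\<dots> = (\<Sum>l\<in>I. fps_nth (X i l) 0 * fps_nth (?N l j) d
        + (\<Sum>e\<in>{1..d}. fps_nth (X i l) e * fps_nth (?N l j) (d - e)))"
  proof (rule sum.cong[OF refl])
    fix l assume "l \<in> I"
    have "{0..d} = insert 0 {1..d}" by auto
    thus "(\<Sum>e=0..d. fps_nth (X i l) e * fps_nth (?N l j) (d - e)) = fps_nth (X i l) 0 * fps_nth (?N l j) d
        + (\<Sum>e\<in>{1..d}. fps_nth (X i l) e * fps_nth (?N l j) (d - e))"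
      by simp
  qed
  also have "\<dots> = fps_nth (?N i j) d + (\<Sum>l\<in>I. \<Sum>e\<in>{1..d}. fps_nth (X i l) e * ric I X (d - e) l j)"
    using U i j fin unfolding UNI_def
    by (simp add: sum.distrib rinvm_def sum.delta cong: if_cong)
  also have "\<dots> = fps_nth (idm I i j) d"
    using i j by (auto simp: rinvm_def idm_def ric.simps[of I X d i j])
  finally show "fps_nth (mm I X ?N i j) d = fps_nth (idm I i j) d" .
qed

lemma rst_rinvm: "rst I (rinvm I X)" unfolding rst_def rinvm_def by auto

lemma UNI_rinvm: "UNI I (rinvm I X)"
  unfolding UNI_def rinvm_def by (auto simp: ric.simps)

lemma mm_cong: "(\<And>x y. x \<in> I \<Longrightarrow> y \<in> I \<Longrightarrow> A x y = A' x y) \<Longrightarrow> (\<And>x y. x \<in> I \<Longrightarrow> y \<in> I \<Longrightarrow> B x y = B' x y)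
  \<Longrightarrow> x \<in> I \<Longrightarrow> z \<in> I \<Longrightarrow> mm I A B x z = mm I A' B' x z"
  unfolding mm_def by (auto intro!: sum.cong)

lemma inverse_exists:
  fixes X :: "'i \<Rightarrow> 'i \<Rightarrow> 'a::real_algebra_1 fps"
  assumes fin: "finite I" and U: "UNI I X"
  shows "\<exists>N. rst I N \<and> UNI I N \<and> (\<forall>i\<in>I. \<forall>j\<in>I. mm I X N i j = idm I i j \<and> mm I N X i j = idm I i j)"
proof -
  define N where "N = rinvm I X"
  have R: "mm I X N i j = idm I i j" if "i \<in> I" "j \<in> I" for i j
    using rinvm_right[OF fin U that] by (simp add: N_def)
  define D where "D = (\<lambda>i j. mm I N X i j - idm I i j)"
  have XD: "(\<Sum>y\<in>I. X x y * D y z) = 0" if x: "x \<in> I" and z: "z \<in> I" for x z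
  proof -
    have "(\<Sum>y\<in>I. X x y * D y z) = mm I X (mm I N X) x z - mm I X (idm I) x z"
      by (simp add: D_def mm_def right_diff_distrib sum_subtractf)
    also have "mm I X (mm I N X) x z = mm I (mm I X N) X x z"
      by (simp add: mm_assoc[OF fin])
    also have "\<dots> = mm I (idm I) X x z"
      by (rule mm_cong) (use R x z in auto)
    also have "\<dots> = (\<Sum>y\<in>I. (if x = y then 1 else 0) * X y z)"
      using x by (simp add: mm_def idm_def)
    also have "\<dots> = X x z" using x fin by (simp add: sum.delta)
    also have "mm I X (idm I) x z = (\<Sum>y\<in>I. X x y * (if y = z then 1 else 0))"
      using x by (simp add: mm_def idm_def cong: if_cong)
    also have "\<dots> = X x z" using z fin by (simp add: sum.delta')
    finally show ?thesis by simp
  qed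
  have "\<forall>x\<in>I. D x z = 0" if z: "z \<in> I" for z
  proof (rule uadic[OF fin, of 1 "\<lambda>x y. X x y - idm I x y"])
    show "fps_nth (X x y - idm I x y) 0 = 0" if "x \<in> I" "y \<in> I" for x y
      using U that unfolding UNI_def idm_def by auto
    show "fps_const (of_real 1) * D x z + (\<Sum>y\<in>I. (X x y - idm I x y) * D y z) = 0" if x: "x \<in> I" for x
    proof -
      have "(\<Sum>y\<in>I. idm I x y * D y z) = D x z"
        using x fin by (simp add: idm_def sum.delta)
      thus ?thesis using XD[OF x z] by (simp add: left_diff_distrib sum_subtractf)
    qed
  qed simp
  hence L: "mm I N X i j = idm I i j" if "i \<in> I" "j \<in> I" for i j
    using that by (auto simp: D_def)
  show ?thesis
    using R L rst_rinvm[of I X] UNI_rinvm[of I X] unfolding N_def by blast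
qed


lemma mmult_mm: "mmult k X Y = mm {..<k} X Y"
  unfolding mmult_def mm_def by simp

lemma rinv_eq:
  fixes x y :: "'a::ring_1"
  assumes "x * y = 1" "y * x = 1"
  shows "rinv x = y"
proof -
  have U: "\<And>y'. x * y' = 1 \<and> y' * x = 1 \<Longrightarrow> y' = y"
  proof -
    fix y' assume h: "x * y' = 1 \<and> y' * x = 1"
    have "y' = y' * (x * y)" using assms by simp
    also have "\<dots> = (y' * x) * y" by (simp add: mult.assoc)
    also have "\<dots> = y" using h by simp
    finally show "y' = y" .
  qed
  show ?thesis unfolding rinv_def
  proof (rule the_equality)
    show "x * y = 1 \<and> y * x = 1" using assms by (rule conjI)
  next
    fix y' assume "x * y' = 1 \<and> y' * x = 1" thus "y' = y" by (rule U)
  qed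
qed

lemma fps_unit_inv:
  fixes x :: "'a::real_algebra_1 fps"
  assumes "fps_nth x 0 = 1"
  shows "x * rinv x = 1 \<and> rinv x * x = 1 \<and> fps_nth (rinv x) 0 = 1"
proof -
  have U: "UNI {0::nat} (\<lambda>_ _. x)" using assms unfolding UNI_def by simp
  have fin: "finite {0::nat}" by simp
  obtain N where N: "rst {0::nat} N" "UNI {0::nat} N"
    "\<forall>i\<in>{0}. \<forall>j\<in>{0}. mm {0} (\<lambda>_ _. x) N i j = idm {0} i j \<and> mm {0} N (\<lambda>_ _. x) i j = idm {0} i j"
    using inverse_exists[OF fin U] by blast
  have m1: "mm {0::nat} (\<lambda>_ _. x) N 0 0 = x * N 0 0" "mm {0::nat} N (\<lambda>_ _. x) 0 0 = N 0 0 * x"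
    unfolding mm_def by simp_all
  have i1: "idm {0::nat} 0 0 = (1::'a fps)" unfolding idm_def by simp
  have "mm {0::nat} (\<lambda>_ _. x) N 0 0 = idm {0::nat} 0 0 \<and> mm {0::nat} N (\<lambda>_ _. x) 0 0 = idm {0::nat} 0 0"
    using N(3) by blast
  hence 1: "x * N 0 0 = 1" "N 0 0 * x = 1" unfolding m1 i1 by simp_all
  have e: "rinv x = N 0 0" by (rule rinv_eq[OF 1])
  have f: "fps_nth (N 0 0) 0 = 1" using N(2) unfolding UNI_def by simp
  show ?thesis unfolding e using 1 f by (intro conjI)
qed

definition minvP :: "nat \<Rightarrow> (nat \<Rightarrow> nat \<Rightarrow> 'a::ring_1) \<Rightarrow> (nat \<Rightarrow> nat \<Rightarrow> 'a) \<Rightarrow> bool" where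
  "minvP k X Y \<longleftrightarrow> (\<forall>i j. (k \<le> i \<or> k \<le> j) \<longrightarrow> Y i j = 0) \<and>
      (\<forall>i<k. \<forall>j<k. mmult k X Y i j = (if i = j then 1 else 0)) \<and>
      (\<forall>i<k. \<forall>j<k. mmult k Y X i j = (if i = j then 1 else 0))"

lemma mat_inv_minvP: "mat_inv k X = (THE Y. minvP k X Y)"
  unfolding mat_inv_def minvP_def by simp

lemma minvP_unique:
  assumes "minvP k X Y" "minvP k X Y'"
  shows "Y' = Y"
proof (intro ext)
  fix i j
  show "Y' i j = Y i j"
  proof (cases "i < k \<and> j < k")
    case False
    hence "k \<le> i \<or> k \<le> j" by auto
    thus ?thesis using assms unfolding minvP_def by metis
  next
    case True
    have fin: "finite {..<k}" by simp
    have A: "mm {..<k} X Y a b = idm {..<k} a b" if "a < k" "b < k" for a b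
    proof -
      have "mmult k X Y a b = (if a = b then 1 else 0)" using assms(1) that unfolding minvP_def by blast
      thus ?thesis using that by (simp add: mmult_mm idm_def)
    qed
    have B: "mm {..<k} Y' X a b = idm {..<k} a b" if "a < k" "b < k" for a b
    proof -
      have "mmult k Y' X a b = (if a = b then 1 else 0)" using assms(2) that unfolding minvP_def by blast
      thus ?thesis using that by (simp add: mmult_mm idm_def)
    qed
    have rY: "rst {..<k} Y"
      unfolding rst_def lessThan_iff not_less using assms(1) unfolding minvP_def by blast
    have rY': "rst {..<k} Y'"
      unfolding rst_def lessThan_iff not_less using assms(2) unfolding minvP_def by blast
    have "Y' i j = mm {..<k} Y' (idm {..<k}) i j" using mm_idm_right[OF fin rY'] by simp
    also have "\<dots> = mm {..<k} Y' (mm {..<k} X Y) i j"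
      by (rule mm_cong) (use True A in simp_all)
    also have "\<dots> = mm {..<k} (mm {..<k} Y' X) Y i j" by (simp add: mm_assoc[OF fin])
    also have "\<dots> = mm {..<k} (idm {..<k}) Y i j"
      by (rule mm_cong) (use True B in simp_all)
    also have "\<dots> = Y i j" using mm_idm_left[OF fin rY] by simp
    finally show ?thesis .
  qed
qed

lemma mat_inv_eq:
  assumes "minvP k X Y"
  shows "mat_inv k X = Y"
  unfolding mat_inv_minvP
proof (rule the_equality)
  show "minvP k X Y" by (rule assms)
next
  fix Y' assume "minvP k X Y'" thus "Y' = Y" using minvP_unique[OF assms] by blast
qed

lemma mat_inv_exists:
  fixes X :: "nat \<Rightarrow> nat \<Rightarrow> 'a::real_algebra_1 fps"
  assumes "UNI {..<k} X"
  shows "minvP k X (mat_inv k X) \<and> UNI {..<k} (mat_inv k X)"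
proof -
  obtain N where N: "rst {..<k} N" "UNI {..<k} N"
    "\<forall>i\<in>{..<k}. \<forall>j\<in>{..<k}. mm {..<k} X N i j = idm {..<k} i j \<and> mm {..<k} N X i j = idm {..<k} i j"
    using inverse_exists[OF _ assms] by auto
  have P: "minvP k X N" unfolding minvP_def
  proof (intro conjI allI impI)
    fix i j assume "k \<le> i \<or> k \<le> j" thus "N i j = 0" using N(1) unfolding rst_def by auto
  next
    fix i j assume "i < k" "j < k"
    thus "mmult k X N i j = (if i = j then 1 else 0)" "mmult k N X i j = (if i = j then 1 else 0)"
      using N(3) unfolding mmult_mm idm_def by auto
  qed
  thus ?thesis using mat_inv_eq[OF P] N(2) by simp
qed

lemma mat_inv_cong:
  assumes "\<And>i j. i < k \<Longrightarrow> j < k \<Longrightarrow> X i j = X' i j"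
  shows "mat_inv k X = mat_inv k X'"
proof -
  have E1: "mmult k X Y i j = mmult k X' Y i j" if "i < k" for i j Y
    unfolding mmult_def by (rule sum.cong) (use assms that in auto)
  have E2: "mmult k Y X i j = mmult k Y X' i j" if "j < k" for i j Y
    unfolding mmult_def by (rule sum.cong) (use assms that in auto)
  have "minvP k X Y = minvP k X' Y" for Y
    unfolding minvP_def by (simp add: E1 E2 cong: conj_cong)
  hence "minvP k X = minvP k X'" by (intro ext)
  thus ?thesis unfolding mat_inv_minvP by simp
qed

lemma mat_inv_perm:
  fixes X :: "nat \<Rightarrow> nat \<Rightarrow> 'a::real_algebra_1 fps"
  assumes U: "UNI {..<k} X" and p: "\<rho> permutes {..<k}"
  shows "mat_inv k (\<lambda>i j. X (\<rho> i) (\<rho> j)) = (\<lambda>i j. mat_inv k X (\<rho> i) (\<rho> j))"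
proof (rule mat_inv_eq)
  let ?N = "mat_inv k X"
  have P: "minvP k X ?N" using mat_inv_exists[OF U] by simp
  have r: "\<rho> i < k \<longleftrightarrow> i < k" for i using p
    by (metis lessThan_iff permutes_in_image)
  have fix_out: "\<rho> i = i" if "\<not> i < k" for i using p that unfolding permutes_def by auto
  have bij: "bij_betw \<rho> {..<k} {..<k}" using p by (rule permutes_imp_bij)
  have inj: "\<rho> i = \<rho> j \<longleftrightarrow> i = j" for i j using p by (metis permutes_inj injD)
  have S1: "mmult k (\<lambda>i j. X (\<rho> i) (\<rho> j)) (\<lambda>i j. ?N (\<rho> i) (\<rho> j)) i j = mmult k X ?N (\<rho> i) (\<rho> j)" for i j
    unfolding mmult_def using sum.reindex_bij_betw[OF bij, of "\<lambda>l. X (\<rho> i) l * ?N l (\<rho> j)"] by simp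
  have S2: "mmult k (\<lambda>i j. ?N (\<rho> i) (\<rho> j)) (\<lambda>i j. X (\<rho> i) (\<rho> j)) i j = mmult k ?N X (\<rho> i) (\<rho> j)" for i j
    unfolding mmult_def using sum.reindex_bij_betw[OF bij, of "\<lambda>l. ?N (\<rho> i) l * X l (\<rho> j)"] by simp
  have P1: "?N a b = 0" if "k \<le> a \<or> k \<le> b" for a b using P that unfolding minvP_def by blast
  have P2: "mmult k X ?N a b = (if a = b then 1 else 0)" if "a < k" "b < k" for a b
    using P that unfolding minvP_def by blast
  have P3: "mmult k ?N X a b = (if a = b then 1 else 0)" if "a < k" "b < k" for a b
    using P that unfolding minvP_def by blast
  show "minvP k (\<lambda>i j. X (\<rho> i) (\<rho> j)) (\<lambda>i j. ?N (\<rho> i) (\<rho> j))"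
    unfolding minvP_def
  proof (intro conjI allI impI)
    fix i j assume "k \<le> i \<or> k \<le> j"
    hence "k \<le> \<rho> i \<or> k \<le> \<rho> j" using r by (meson not_less)
    thus "?N (\<rho> i) (\<rho> j) = 0" by (rule P1)
  next
    fix i j assume "i < k" "j < k"
    hence "\<rho> i < k" "\<rho> j < k" using r by auto
    thus "mmult k (\<lambda>i j. X (\<rho> i) (\<rho> j)) (\<lambda>i j. ?N (\<rho> i) (\<rho> j)) i j = (if i = j then 1 else 0)"
      unfolding S1 using P2 by (simp add: inj)
  next
    fix i j assume "i < k" "j < k"
    hence "\<rho> i < k" "\<rho> j < k" using r by auto
    thus "mmult k (\<lambda>i j. ?N (\<rho> i) (\<rho> j)) (\<lambda>i j. X (\<rho> i) (\<rho> j)) i j = (if i = j then 1 else 0)"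
      unfolding S2 using P3 by (simp add: inj)
  qed
qed


lemma minvP_facts:
  assumes "minvP k X Y"
  shows "\<And>i j. k \<le> i \<or> k \<le> j \<Longrightarrow> Y i j = 0"
    "\<And>i j. i < k \<Longrightarrow> j < k \<Longrightarrow> (\<Sum>l<k. X i l * Y l j) = (if i = j then 1 else 0)"
    "\<And>i j. i < k \<Longrightarrow> j < k \<Longrightarrow> (\<Sum>l<k. Y i l * X l j) = (if i = j then 1 else 0)"
  using assms unfolding minvP_def mmult_def by blast+

lemma mat_inv_block:
  fixes X :: "nat \<Rightarrow> nat \<Rightarrow> 'a::real_algebra_1 fps"
  assumes U: "UNI {..<Suc k} X"
  shows "\<And>i j. i < k \<Longrightarrow> j < k \<Longrightarrow> mat_inv k X i j =
     mat_inv (Suc k) X i j - mat_inv (Suc k) X i k * rinv (mat_inv (Suc k) X k k) * mat_inv (Suc k) X k j"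
proof -
  define N where "N = mat_inv (Suc k) X"
  define ni where "ni = rinv (N k k)"
  have E: "minvP (Suc k) X N" "UNI {..<Suc k} N" using mat_inv_exists[OF U] by (simp_all add: N_def)
  note F = minvP_facts[OF E(1)]
  have "fps_nth (N k k) 0 = 1" using E(2) unfolding UNI_def by simp
  hence ni: "N k k * ni = 1" "ni * N k k = 1" using fps_unit_inv unfolding ni_def by blast+
  define Y where "Y = (\<lambda>i j. if i < k \<and> j < k then N i j - N i k * ni * N k j else 0)"
  have "minvP k X Y" unfolding minvP_def mmult_def
  proof (intro conjI allI impI)
    fix i j assume "k \<le> i \<or> k \<le> j" thus "Y i j = 0" unfolding Y_def by auto
  next
    fix i j assume i: "i < k" and j: "j < k"
    have s1: "(\<Sum>l<k. X i l * N l j) = (if i = j then 1 else 0) - X i k * N k j"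
      using F(2)[of i j] i j by (simp add: algebra_simps)
    have s2: "(\<Sum>l<k. X i l * N l k) = - (X i k * N k k)"
      using F(2)[of i k] i by (simp add: add_eq_0_iff)
    have "(\<Sum>l<k. X i l * Y l j) = (\<Sum>l<k. X i l * N l j - (X i l * N l k) * (ni * N k j))"
      by (rule sum.cong) (auto simp: Y_def j right_diff_distrib mult.assoc)
    also have "\<dots> = (\<Sum>l<k. X i l * N l j) - (\<Sum>l<k. X i l * N l k) * (ni * N k j)"
      by (simp add: sum_subtractf sum_distrib_right)
    also have "\<dots> = (if i = j then 1 else 0) - X i k * N k j + X i k * (N k k * ni) * N k j"
      unfolding s1 s2 by (simp add: mult.assoc)
    also have "\<dots> = (if i = j then 1 else 0)" using ni by simp
    finally show "(\<Sum>l<k. X i l * Y l j) = (if i = j then 1 else 0)" .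
  next
    fix i j assume i: "i < k" and j: "j < k"
    have s1: "(\<Sum>l<k. N i l * X l j) = (if i = j then 1 else 0) - N i k * X k j"
      using F(3)[of i j] i j by (simp add: algebra_simps)
    have s2: "(\<Sum>l<k. N k l * X l j) = - (N k k * X k j)"
      using F(3)[of k j] j by (simp add: add_eq_0_iff)
    have "(\<Sum>l<k. Y i l * X l j) = (\<Sum>l<k. N i l * X l j - (N i k * ni) * (N k l * X l j))"
      by (rule sum.cong) (auto simp: Y_def i left_diff_distrib mult.assoc)
    also have "\<dots> = (\<Sum>l<k. N i l * X l j) - (N i k * ni) * (\<Sum>l<k. N k l * X l j)"
      by (simp add: sum_subtractf sum_distrib_left)
    also have "\<dots> = (if i = j then 1 else 0) - N i k * X k j + N i k * (ni * N k k) * X k j"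
      unfolding s1 s2 by (simp add: mult.assoc)
    also have "\<dots> = (if i = j then 1 else 0)" using ni by simp
    finally show "(\<Sum>l<k. Y i l * X l j) = (if i = j then 1 else 0)" .
  qed
  hence "mat_inv k X = Y" by (rule mat_inv_eq)
  thus "\<And>i j. i < k \<Longrightarrow> j < k \<Longrightarrow> mat_inv k X i j =
     mat_inv (Suc k) X i j - mat_inv (Suc k) X i k * rinv (mat_inv (Suc k) X k k) * mat_inv (Suc k) X k j"
    by (simp add: Y_def N_def ni_def)
qed


definition madd :: "('i \<Rightarrow> 'i \<Rightarrow> 'r::plus) \<Rightarrow> ('i \<Rightarrow> 'i \<Rightarrow> 'r) \<Rightarrow> 'i \<Rightarrow> 'i \<Rightarrow> 'r" where
  "madd A B = (\<lambda>x z. A x z + B x z)"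
definition msub :: "('i \<Rightarrow> 'i \<Rightarrow> 'r::minus) \<Rightarrow> ('i \<Rightarrow> 'i \<Rightarrow> 'r) \<Rightarrow> 'i \<Rightarrow> 'i \<Rightarrow> 'r" where
  "msub A B = (\<lambda>x z. A x z - B x z)"
definition mz :: "'i \<Rightarrow> 'i \<Rightarrow> 'r::zero" where "mz = (\<lambda>_ _. 0)"

lemma mm_madd_left: "mm I (madd A B) C = madd (mm I A C) (mm I B C)"
  unfolding madd_def by (rule mm_add_left)
lemma mm_madd_right: "mm I C (madd A B) = madd (mm I C A) (mm I C B)"
  unfolding madd_def by (rule mm_add_right)
lemma mm_msub_left: "mm I (msub A B) (C::'i\<Rightarrow>'i\<Rightarrow>'r::ring) = msub (mm I A C) (mm I B C)"
  unfolding msub_def by (rule mm_diff_left)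
lemma mm_msub_right: "mm I (C::'i\<Rightarrow>'i\<Rightarrow>'r::ring) (msub A B) = msub (mm I C A) (mm I C B)"
  unfolding msub_def by (rule mm_diff_right)
lemma mm_mz_left: "mm I mz (C::'i\<Rightarrow>'i\<Rightarrow>'r::ring) = mz" unfolding mm_def mz_def by simp
lemma mm_mz_right: "mm I (C::'i\<Rightarrow>'i\<Rightarrow>'r::ring) mz = mz" unfolding mm_def mz_def by simp

lemma rst_madd: "rst I A \<Longrightarrow> rst I B \<Longrightarrow> rst I (madd A (B::'i\<Rightarrow>'i\<Rightarrow>'r::monoid_add))" unfolding rst_def madd_def by simp
lemma rst_msub: "rst I A \<Longrightarrow> rst I B \<Longrightarrow> rst I (msub A (B::'i\<Rightarrow>'i\<Rightarrow>'r::ab_group_add))" unfolding rst_def msub_def by simp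

lemma tensor_core:
  fixes Y W P :: "'i \<Rightarrow> 'i \<Rightarrow> 'a::real_algebra_1 fps"
  assumes fin: "finite I" and rY: "rst I Y" and rW: "rst I W" and rP: "rst I P"
    and YW: "mm I Y W = idm I" and PP: "mm I P P = idm I"
    and Man: "mm I (mm I (msub (idm I) P) Y) (madd (idm I) P) = mz"
    and Y0: "\<And>x z. x \<in> I \<Longrightarrow> z \<in> I \<Longrightarrow> fps_nth (Y x z) 0 = fps_nth (idm I x z) 0"
  shows "mm I (mm I (msub (idm I) P) W) (madd (idm I) P) = mz"
proof -
  define Id :: "'i \<Rightarrow> 'i \<Rightarrow> 'a fps" where "Id = idm I"
  define A where "A = msub Id P"
  define B where "B = madd Id P"
  define Z where "Z = mm I (mm I A W) B"
  note assoc = mm_assoc[OF fin]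
  have rId: "rst I Id" unfolding Id_def by (rule rst_idm)
  have rA: "rst I A" unfolding A_def by (intro rst_msub rId rP)
  have rB: "rst I B" unfolding B_def by (intro rst_madd rId rP)
  have rZ: "rst I Z" unfolding Z_def by (intro rst_mm rA rW rB)
  have IdL: "rst I C \<Longrightarrow> mm I Id C = C" for C unfolding Id_def using mm_idm_left[OF fin] by blast
  have IdR: "rst I C \<Longrightarrow> mm I C Id = C" for C unfolding Id_def using mm_idm_right[OF fin] by blast
  have AA: "mm I A A = madd A A"
    unfolding A_def mm_msub_left mm_msub_right IdL[OF rId] IdL[OF rP] IdR[OF rP] PP[folded Id_def]
    by (auto simp: msub_def madd_def algebra_simps)
  have AB: "mm I A B = mz"
    unfolding A_def B_def mm_msub_left mm_madd_right IdL[OF rId] IdL[OF rP] IdR[OF rP] PP[folded Id_def]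
    by (auto simp: msub_def madd_def mz_def)
  have AYB: "mm I (mm I A Y) B = mz" using Man unfolding A_def B_def Id_def .
  have YW': "mm I Y W = Id" using YW unfolding Id_def .
  have eqA: "mm I C A = msub C (mm I C P)" if "rst I C" for C
    unfolding A_def mm_msub_right IdR[OF that] ..
  have YWB: "mm I Y (mm I W B) = B" unfolding assoc[symmetric] YW' IdL[OF rB] ..
  have AZ: "mm I A Z = madd Z Z"
    unfolding Z_def assoc[symmetric] AA mm_madd_left ..
  have AYP: "mm I (mm I A Y) P = msub mz (mm I A Y)"
  proof -
    have "P = msub B Id" unfolding B_def by (auto simp: msub_def madd_def)
    hence "mm I (mm I A Y) P = msub (mm I (mm I A Y) B) (mm I (mm I A Y) Id)"
      by (simp add: mm_msub_right)
    thus ?thesis unfolding AYB IdR[OF rst_mm[OF rst_mm[OF rA rY] rId]] IdR[OF rst_mm[OF rA rY]] .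
  qed
  have AYAZ: "mm I (mm I (mm I A Y) A) Z = mz"
  proof -
    have "mm I (mm I (mm I A Y) A) Z = mm I (mm I A Y) (madd Z Z)" unfolding assoc AZ ..
    also have "\<dots> = madd (mm I (mm I A Y) Z) (mm I (mm I A Y) Z)" by (rule mm_madd_right)
    also have "mm I (mm I A Y) Z = mz"
    proof -
      have "mm I (mm I A Y) Z = mm I (mm I (mm I A Y) A) (mm I W B)" unfolding Z_def assoc ..
      also have "mm I (mm I A Y) A = msub (mm I A Y) (mm I (mm I A Y) P)"
        using eqA[OF rst_mm[OF rA rY]] .
      also have "\<dots> = madd (mm I A Y) (mm I A Y)" unfolding AYP by (auto simp: msub_def madd_def mz_def)
      also have "mm I \<dots> (mm I W B) = madd (mm I A B) (mm I A B)"
        unfolding mm_madd_left assoc YWB ..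
      also have "\<dots> = mz" unfolding AB by (simp add: madd_def mz_def)
      finally show ?thesis .
    qed
    finally show ?thesis by (simp add: madd_def mz_def)
  qed
  define H where "H = msub Y Id"
  have YH: "Y = madd Id H" unfolding H_def by (auto simp: madd_def msub_def)
  have rH: "rst I H" unfolding H_def by (intro rst_msub rY rId)
  define G where "G = mm I (mm I A H) A"
  have "mm I (mm I (mm I A Y) A) Z = madd (mm I (mm I A A) Z) (mm I G Z)"
    unfolding YH G_def mm_madd_right mm_madd_left IdR[OF rA] ..
  also have "mm I (mm I A A) Z = madd (madd Z Z) (madd Z Z)"
    unfolding assoc AZ mm_madd_right ..
  finally have eq4: "madd (madd (madd Z Z) (madd Z Z)) (mm I G Z) = mz" using AYAZ by simp
  have G0: "fps_nth (G x y) 0 = 0" if "x \<in> I" "y \<in> I" for x y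
  proof -
    have H0: "fps_nth (H a b) 0 = 0" if "a \<in> I" "b \<in> I" for a b
      using Y0[OF that] unfolding H_def Id_def msub_def by simp
    show ?thesis unfolding G_def mm_def
      by (simp add: fps_nth_sum H0)
  qed
  have "\<forall>x\<in>I. Z x z = 0" for z
  proof (rule uadic[OF fin, of 4 G])
    show "fps_nth (G x y) 0 = 0" if "x \<in> I" "y \<in> I" for x y using G0 that .
    show "fps_const (of_real 4) * Z x z + (\<Sum>y\<in>I. G x y * Z y z) = 0" if "x \<in> I" for x
    proof -
      have c4: "fps_const (of_real 4 :: 'a) = (4 :: 'a fps)"
        by (simp only: numeral_fps_const of_real_numeral)
      have "(4::'a fps) * w = w + w + w + w" for w
        by (simp only: numeral_Bit0 numeral_One distrib_right mult_1_left add.assoc)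
      hence "fps_const (of_real 4) * Z x z = Z x z + Z x z + Z x z + Z x z"
        unfolding c4 .
      moreover have "madd (madd (madd Z Z) (madd Z Z)) (mm I G Z) x z = 0"
        using eq4 by (simp add: mz_def)
      ultimately show ?thesis by (simp add: madd_def mm_def add.assoc)
    qed
  qed simp
  hence "Z = mz" using rZ unfolding rst_def mz_def by (auto intro!: ext)
  thus ?thesis unfolding Z_def A_def B_def Id_def .
qed


definition sg :: "nat \<Rightarrow> 'r::ring_1" where "sg n = (if even n then 1 else -1)"

lemma sg_mult: "sg m * sg n = (sg (m + n) :: 'r::ring_1)" unfolding sg_def by auto
lemma sg_comm: "sg n * (w::'r::ring_1) = w * sg n" unfolding sg_def by auto
lemma sg_sq: "sg n * sg n = (1::'r::ring_1)" unfolding sg_def by auto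
lemma sg_cong: "even m = even n \<Longrightarrow> sg m = sg n" unfolding sg_def by auto
lemma sg_even: "even n \<Longrightarrow> sg n = 1" unfolding sg_def by auto

definition I2 :: "nat \<Rightarrow> (nat \<times> nat) set" where "I2 K = {..<K} \<times> {..<K}"

lemma fin_I2: "finite (I2 K)" unfolding I2_def by simp

lemma sum_I2: "sum f (I2 K) = (\<Sum>a<K. \<Sum>b<K. f (a, b))"
  unfolding I2_def by (simp add: sum.cartesian_product)

definition TPm :: "nat \<Rightarrow> (nat \<Rightarrow> nat) \<Rightarrow> nat \<times> nat \<Rightarrow> nat \<times> nat \<Rightarrow> 'r::ring_1" where
  "TPm K p = (\<lambda>x y. if x \<in> I2 K \<and> y \<in> I2 K \<and> y = (snd x, fst x) then sg (p (fst y) * p (snd y)) else 0)"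

lemma rst_TPm: "rst (I2 K) (TPm K p)" unfolding rst_def TPm_def by auto

lemma swap_I2: "x \<in> I2 K \<Longrightarrow> (snd x, fst x) \<in> I2 K" unfolding I2_def by auto

lemma TP_left:
  assumes "x \<in> I2 K"
  shows "mm (I2 K) (TPm K p) A x z = sg (p (fst x) * p (snd x)) * A (snd x, fst x) z"
proof -
  have "mm (I2 K) (TPm K p) A x z = (\<Sum>y\<in>I2 K. if y = (snd x, fst x) then sg (p (snd x) * p (fst x)) * A (snd x, fst x) z else 0)"
    unfolding mm_def TPm_def using assms by (intro sum.cong) auto
  also have "\<dots> = sg (p (snd x) * p (fst x)) * A (snd x, fst x) z"
    using swap_I2[OF assms] by (simp add: sum.delta[OF fin_I2])
  finally show ?thesis by (simp add: mult.commute)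
qed

lemma TP_right:
  assumes "z \<in> I2 K"
  shows "mm (I2 K) A (TPm K p) x z = A x (snd z, fst z) * sg (p (fst z) * p (snd z))"
proof -
  have "mm (I2 K) A (TPm K p) x z = (\<Sum>y\<in>I2 K. if y = (snd z, fst z) then A x (snd z, fst z) * sg (p (fst z) * p (snd z)) else 0)"
    unfolding mm_def TPm_def using assms by (intro sum.cong) auto
  also have "\<dots> = A x (snd z, fst z) * sg (p (fst z) * p (snd z))"
    using swap_I2[OF assms] by (simp add: sum.delta[OF fin_I2])
  finally show ?thesis .
qed

lemma TPP: "mm (I2 K) (TPm K p) (TPm K p) = (idm (I2 K) :: _ \<Rightarrow> _ \<Rightarrow> 'r::ring_1)"
proof (intro ext)
  fix x z :: "nat \<times> nat"
  show "mm (I2 K) (TPm K p) (TPm K p) x z = (idm (I2 K) x z :: 'r)"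
  proof (cases "x \<in> I2 K")
    case True
    have sw: "(snd x, fst x) \<in> I2 K" using swap_I2[OF True] .
    show ?thesis unfolding TP_left[OF True] using sw True
      by (cases x; cases z) (auto simp: TPm_def idm_def sg_mult sg_even)
  next
    case False thus ?thesis unfolding mm_def TPm_def idm_def by simp
  qed
qed

lemma PTP_entry:
  fixes T :: "nat \<times> nat \<Rightarrow> nat \<times> nat \<Rightarrow> 'r::ring_1"
  assumes rT: "rst (I2 K) T" and x: "x \<in> I2 K" and z: "z \<in> I2 K"
  shows "mm (I2 K) (mm (I2 K) (msub (idm (I2 K)) (TPm K p)) T) (madd (idm (I2 K)) (TPm K p)) x z =
    T x z - sg (p (fst x) * p (snd x)) * T (snd x, fst x) z
    + (T x (snd z, fst z) - sg (p (fst x) * p (snd x)) * T (snd x, fst x) (snd z, fst z)) * sg (p (fst z) * p (snd z))"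
proof -
  have fin: "finite (I2 K)" by (rule fin_I2)
  define Q where "Q = mm (I2 K) (msub (idm (I2 K)) (TPm K p)) T"
  have rQ: "rst (I2 K) Q" unfolding Q_def by (intro rst_mm rst_msub rst_idm rst_TPm rT)
  have Qe: "Q y w = T y w - sg (p (fst y) * p (snd y)) * T (snd y, fst y) w" if "y \<in> I2 K" for y w
    unfolding Q_def mm_msub_left mm_idm_left[OF fin rT] using TP_left[OF that] by (simp add: msub_def)
  have "mm (I2 K) Q (madd (idm (I2 K)) (TPm K p)) x z = Q x z + Q x (snd z, fst z) * sg (p (fst z) * p (snd z))"
    unfolding mm_madd_right mm_idm_right[OF fin rQ] using TP_right[OF z] by (simp add: madd_def)
  thus ?thesis unfolding Q_def[symmetric] Qe[OF x] .
qed


definition TYm :: "nat \<Rightarrow> (nat \<Rightarrow> nat) \<Rightarrow> (nat \<Rightarrow> nat \<Rightarrow> 'r::ring_1) \<Rightarrow> nat \<times> nat \<Rightarrow> nat \<times> nat \<Rightarrow> 'r" where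
  "TYm K p M = (\<lambda>x y. if x \<in> I2 K \<and> y \<in> I2 K then
     sg (p (fst y) * (p (snd x) + p (snd y))) * (M (fst x) (fst y) * M (snd x) (snd y)) else 0)"
definition TWm :: "nat \<Rightarrow> (nat \<Rightarrow> nat) \<Rightarrow> (nat \<Rightarrow> nat \<Rightarrow> 'r::ring_1) \<Rightarrow> nat \<times> nat \<Rightarrow> nat \<times> nat \<Rightarrow> 'r" where
  "TWm K p N = (\<lambda>x y. if x \<in> I2 K \<and> y \<in> I2 K then
     sg (p (fst x) * (p (snd x) + p (snd y))) * (N (snd x) (snd y) * N (fst x) (fst y)) else 0)"

definition Yc :: "(nat \<Rightarrow> nat) \<Rightarrow> (nat \<Rightarrow> nat \<Rightarrow> 'r::ring_1) \<Rightarrow> nat \<Rightarrow> nat \<Rightarrow> nat \<Rightarrow> nat \<Rightarrow> 'r" where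
  "Yc p M i k j l = sg (p j * (p k + p l)) * (M i j * M k l)"
definition Vc :: "(nat \<Rightarrow> nat) \<Rightarrow> (nat \<Rightarrow> nat \<Rightarrow> 'r::ring_1) \<Rightarrow> nat \<Rightarrow> nat \<Rightarrow> nat \<Rightarrow> nat \<Rightarrow> 'r" where
  "Vc p N i k j l = sg (p i * (p k + p l)) * (N k l * N i j)"
definition Rel :: "(nat \<Rightarrow> nat \<Rightarrow> nat \<Rightarrow> nat \<Rightarrow> 'r::ring_1) \<Rightarrow> (nat \<Rightarrow> nat) \<Rightarrow> nat \<Rightarrow> nat \<Rightarrow> nat \<Rightarrow> nat \<Rightarrow> 'r" where
  "Rel f p i k j l = f i k j l - sg (p i * p k) * f k i j l + (f i k l j - sg (p i * p k) * f k i l j) * sg (p j * p l)"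

definition SMc :: "nat \<Rightarrow> (nat \<Rightarrow> nat) \<Rightarrow> (nat \<Rightarrow> nat \<Rightarrow> 'r::ring_1) \<Rightarrow> bool" where
  "SMc K p M \<longleftrightarrow> (\<forall>i<K. \<forall>k<K. \<forall>j<K. \<forall>l<K. Rel (Yc p M) p i k j l = 0)"
definition SMr :: "nat \<Rightarrow> (nat \<Rightarrow> nat) \<Rightarrow> (nat \<Rightarrow> nat \<Rightarrow> 'r::ring_1) \<Rightarrow> bool" where
  "SMr K p N \<longleftrightarrow> (\<forall>i<K. \<forall>k<K. \<forall>j<K. \<forall>l<K. Rel (Vc p N) p i k j l = 0)"

lemma sg_pull: "sg m * X * (sg n * Y) = sg (m + n) * (X * (Y::'r::ring_1))"
  unfolding sg_def by auto

lemma rst_TYm: "rst (I2 K) (TYm K p M)" unfolding rst_def TYm_def by auto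
lemma rst_TWm: "rst (I2 K) (TWm K p M)" unfolding rst_def TWm_def by auto

lemma TY_TW:
  fixes M N :: "nat \<Rightarrow> nat \<Rightarrow> 'r::ring_1"
  assumes R: "\<And>i j. i < K \<Longrightarrow> j < K \<Longrightarrow> (\<Sum>l<K. M i l * N l j) = (if i = j then 1 else 0)"
  shows "mm (I2 K) (TYm K p M) (TWm K p N) = idm (I2 K)"
proof (intro ext)
  fix x z :: "nat \<times> nat"
  show "mm (I2 K) (TYm K p M) (TWm K p N) x z = idm (I2 K) x z"
  proof (cases "x \<in> I2 K \<and> z \<in> I2 K")
    case False thus ?thesis unfolding mm_def TYm_def TWm_def idm_def by auto
  next
    case True
    obtain i k where x: "x = (i, k)" by (cases x)
    obtain j l where z: "z = (j, l)" by (cases z)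
    have ik: "i < K" "k < K" and jl: "j < K" "l < K" using True x z unfolding I2_def by auto
    have "mm (I2 K) (TYm K p M) (TWm K p N) x z =
      (\<Sum>a<K. \<Sum>b<K. sg (p a * (p k + p b)) * (M i a * M k b) * (sg (p a * (p b + p l)) * (N b l * N a j)))"
      unfolding mm_def sum_I2 using True x z by (simp add: TYm_def TWm_def I2_def)
    also have "\<dots> = (\<Sum>a<K. \<Sum>b<K. sg (p a * (p k + p l)) * (M i a * (M k b * N b l) * N a j))"
    proof (intro sum.cong refl)
      fix a b
      have e: "even (p a * (p k + p b) + p a * (p b + p l)) = even (p a * (p k + p l))"
      proof -
        have "p a * (p k + p b) + p a * (p b + p l) = p a * (p k + p l) + 2 * (p a * p b)"
          by (simp add: algebra_simps)
        thus ?thesis by simp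
      qed
      show "sg (p a * (p k + p b)) * (M i a * M k b) * (sg (p a * (p b + p l)) * (N b l * N a j))
          = sg (p a * (p k + p l)) * (M i a * (M k b * N b l) * N a j)"
        unfolding sg_pull sg_cong[OF e] by (simp only: mult.assoc)
    qed
    also have "\<dots> = (\<Sum>a<K. sg (p a * (p k + p l)) * (M i a * (\<Sum>b<K. M k b * N b l) * N a j))"
      by (simp add: sum_distrib_left sum_distrib_right)
    also have "\<dots> = (\<Sum>a<K. sg (p a * (p k + p l)) * (M i a * (if k = l then 1 else 0) * N a j))"
      using R[OF ik(2) jl(2)] by simp
    also have "\<dots> = (if k = l then (\<Sum>a<K. M i a * N a j) else 0)"
    proof (cases "k = l")
      case True
      have "sg (p a * (p k + p l)) = (1::'r)" for a using True by (intro sg_even) simp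
      thus ?thesis using True by simp
    qed simp
    also have "\<dots> = idm (I2 K) x z"
      using R[OF ik(1) jl(1)] True x z by (auto simp: idm_def)
    finally show ?thesis .
  qed
qed

lemma Man_TY:
  assumes "SMc K p (M :: nat \<Rightarrow> nat \<Rightarrow> 'r::ring_1)"
  shows "mm (I2 K) (mm (I2 K) (msub (idm (I2 K)) (TPm K p)) (TYm K p M)) (madd (idm (I2 K)) (TPm K p)) = mz"
proof (intro ext)
  fix x z :: "nat \<times> nat"
  show "mm (I2 K) (mm (I2 K) (msub (idm (I2 K)) (TPm K p)) (TYm K p M)) (madd (idm (I2 K)) (TPm K p)) x z = mz x z"
  proof (cases "x \<in> I2 K \<and> z \<in> I2 K")
    case False
    have "rst (I2 K) (mm (I2 K) (mm (I2 K) (msub (idm (I2 K)) (TPm K p)) (TYm K p M)) (madd (idm (I2 K)) (TPm K p)))"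
      by (intro rst_mm rst_msub rst_madd rst_idm rst_TPm rst_TYm)
    moreover have "x \<notin> I2 K \<or> z \<notin> I2 K" using False by blast
    ultimately show ?thesis unfolding rst_def mz_def by blast
  next
    case True
    obtain i k where x: "x = (i, k)" by (cases x)
    obtain j l where z: "z = (j, l)" by (cases z)
    have ik: "i < K" "k < K" and jl: "j < K" "l < K" using True x z unfolding I2_def by auto
    have m: "(i, k) \<in> I2 K" "(k, i) \<in> I2 K" "(j, l) \<in> I2 K" "(l, j) \<in> I2 K"
      using ik jl unfolding I2_def by auto
    have E: "TYm K p M (a, b) (c, d) = Yc p M a b c d" if "(a, b) \<in> I2 K" "(c, d) \<in> I2 K" for a b c d
      using that unfolding TYm_def Yc_def by simp
    have R0: "Rel (Yc p M) p i k j l = 0" using assms ik jl unfolding SMc_def by blast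
    show ?thesis unfolding PTP_entry[OF rst_TYm True[THEN conjunct1] True[THEN conjunct2]]
      unfolding x z fst_conv snd_conv E[OF m(1) m(3)] E[OF m(2) m(3)] E[OF m(1) m(4)] E[OF m(2) m(4)]
      using R0 unfolding Rel_def mz_def .
  qed
qed

lemma SMr_of:
  assumes "mm (I2 K) (mm (I2 K) (msub (idm (I2 K)) (TPm K p)) (TWm K p N)) (madd (idm (I2 K)) (TPm K p)) = mz"
  shows "SMr K p (N :: nat \<Rightarrow> nat \<Rightarrow> 'r::ring_1)"
  unfolding SMr_def
proof (intro allI impI)
  fix i k j l assume ik: "i < K" "k < K" and jl: "j < K" "l < K"
  have x: "(i, k) \<in> I2 K" and z: "(j, l) \<in> I2 K" using ik jl unfolding I2_def by auto
  have "mm (I2 K) (mm (I2 K) (msub (idm (I2 K)) (TPm K p)) (TWm K p N)) (madd (idm (I2 K)) (TPm K p)) (i, k) (j, l) = 0"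
    using assms by (simp add: mz_def)
  have m: "(i, k) \<in> I2 K" "(k, i) \<in> I2 K" "(j, l) \<in> I2 K" "(l, j) \<in> I2 K"
    using ik jl unfolding I2_def by auto
  have E: "TWm K p N (a, b) (c, d) = Vc p N a b c d" if "(a, b) \<in> I2 K" "(c, d) \<in> I2 K" for a b c d
    using that unfolding TWm_def Vc_def by simp
  show "Rel (Vc p N) p i k j l = 0" using \<open>_ = 0\<close>
    unfolding PTP_entry[OF rst_TWm x z]
    unfolding fst_conv snd_conv E[OF m(1) m(3)] E[OF m(2) m(3)] E[OF m(1) m(4)] E[OF m(2) m(4)]
    unfolding Rel_def .
qed

lemma inv_SM:
  fixes M N :: "nat \<Rightarrow> nat \<Rightarrow> 'a::real_algebra_1 fps"
  assumes U: "UNI {..<K} M" and S: "SMc K p M"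
    and R: "\<And>i j. i < K \<Longrightarrow> j < K \<Longrightarrow> (\<Sum>l<K. M i l * N l j) = (if i = j then 1 else 0)"
  shows "SMr K p N"
proof (rule SMr_of, rule tensor_core[OF fin_I2 rst_TYm rst_TWm rst_TPm TY_TW[OF R] TPP Man_TY[OF S]])
  fix x z assume x: "x \<in> I2 K" and z: "z \<in> I2 K"
  obtain i k where xx: "x = (i, k)" by (cases x)
  obtain j l where zz: "z = (j, l)" by (cases z)
  have ik: "i < K" "k < K" and jl: "j < K" "l < K" using x z xx zz unfolding I2_def by auto
  have Mij: "fps_nth (M a b) 0 = (if a = b then 1 else 0)" if "a < K" "b < K" for a b
    using U that unfolding UNI_def by auto
  have "fps_nth (TYm K p M x z) 0 = sg (p j * (p k + p l)) * ((if i = j then 1 else 0) * (if k = l then 1 else 0))"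
    using x z unfolding xx zz TYm_def by (simp add: Mij ik jl sg_def)
  also have "\<dots> = fps_nth (idm (I2 K) x z) 0"
    using x z unfolding xx zz by (auto simp: idm_def sg_even)
  finally show "fps_nth (TYm K p M x z) 0 = fps_nth (idm (I2 K) x z) 0" .
qed


lemma inv_unique_left: "u * x = 1 \<Longrightarrow> x * v = 1 \<Longrightarrow> u = (v::'r::ring_1)"
  by (metis mult.assoc mult_1_left mult_1_right)

lemma case00:
  fixes a b c d ai di S T Si Ti :: "'r::ring_1"
  assumes "a * ai = 1" "ai * a = 1" "d * di = 1" "di * d = 1"
    and S: "S = a - b * di * c" and T: "T = d - c * ai * b"
    and "S * Si = 1" "Si * S = 1" "T * Ti = 1" "Ti * T = 1"
    and ac: "a * c = c * a" and bd: "b * d = d * b" and x: "d * a - a * d = b * c - c * b"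
  shows "Si * di = Ti * ai"
proof -
  have dS: "d * S = d * a - b * c"
  proof -
    have "d * S = d * a - d * b * di * c" unfolding S by (simp add: algebra_simps)
    also have "d * b * di * c = b * (d * di) * c" using bd by (metis mult.assoc)
    finally show ?thesis using assms(3) by simp
  qed
  have aT: "a * T = a * d - c * b"
  proof -
    have "a * T = a * d - a * c * ai * b" unfolding T by (simp add: algebra_simps)
    also have "a * c * ai * b = c * (a * ai) * b" using ac by (simp add: mult.assoc)
    finally show ?thesis using assms(1) by simp
  qed
  have eq: "d * S = a * T" unfolding dS aT using x by (simp add: algebra_simps)
  have l: "(Si * di) * (d * S) = 1"
  proof -
    have "(Si * di) * (d * S) = Si * (di * d) * S" by (simp add: mult.assoc)
    thus ?thesis using assms(4,8) by simp
  qed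
  have r: "(a * T) * (Ti * ai) = 1"
  proof -
    have "(a * T) * (Ti * ai) = a * (T * Ti) * ai" by (simp add: mult.assoc)
    thus ?thesis using assms by simp
  qed
  show ?thesis using inv_unique_left[OF l, of "Ti * ai"] r eq by simp
qed

lemma case01:
  fixes a b c d ai di S T Si :: "'r::ring_1"
  assumes "a * ai = 1" "ai * a = 1" "d * di = 1" "di * d = 1"
    and S: "S = a - b * di * c" and T: "T = d - c * ai * b"
    and "S * Si = 1" "Si * S = 1"
    and ac: "a * c = c * a" and cc: "c * c = 0" and cd: "c * d = d * c" and x: "d * a - a * d = - (b * c + c * b)"
  shows "Si * d = T * ai"
proof -
  have "S * T = a * d - a * c * ai * b - b * di * c * d + b * di * (c * c) * ai * b"
    unfolding S T by (simp add: algebra_simps)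
  also have "a * c * ai * b = c * (a * ai) * b" using ac by (simp add: mult.assoc)
  also have "b * di * c * d = b * (di * d) * c" using cd by (simp add: mult.assoc)
  finally have e1: "S * T = a * d - c * b - b * c" using assms(1,4) cc by simp
  have "S * T - d * a = - (d * a - a * d) - (b * c + c * b)" unfolding e1 by (simp add: algebra_simps)
  also have "\<dots> = 0" unfolding x by simp
  finally have ST: "S * T = d * a" by simp
  have "Si * d = Si * d * (a * ai)" using assms by simp
  also have "\<dots> = Si * (d * a) * ai" by (simp add: mult.assoc)
  also have "\<dots> = (Si * S) * T * ai" unfolding ST[symmetric] by (simp add: mult.assoc)
  finally show ?thesis using assms by simp
qed

lemma case10:
  fixes a b c d ai di S T Ti :: "'r::ring_1"
  assumes "a * ai = 1" "ai * a = 1" "d * di = 1" "di * d = 1"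
    and S: "S = a - b * di * c" and T: "T = d - c * ai * b"
    and "T * Ti = 1" "Ti * T = 1"
    and ab: "a * b = b * a" and bb: "b * b = 0" and bd: "b * d = d * b" and x: "d * a - a * d = b * c + c * b"
  shows "S * di = Ti * a"
proof -
  have "T * S = d * a - d * b * di * c - c * ai * b * a + c * ai * (b * b) * di * c"
    unfolding S T by (simp add: algebra_simps)
  also have "d * b * di * c = b * (d * di) * c" using bd by (metis mult.assoc)
  also have "c * ai * b * a = c * (ai * a) * b" using ab by (simp add: mult.assoc)
  finally have e1: "T * S = d * a - b * c - c * b" using assms(2,3) bb by simp
  have "T * S - a * d = (d * a - a * d) - (b * c + c * b)" unfolding e1 by (simp add: algebra_simps)
  also have "\<dots> = 0" unfolding x by simp
  finally have TS: "T * S = a * d" by simp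
  have "S * di = (Ti * T) * S * di" using assms by simp
  also have "\<dots> = Ti * (T * S) * di" by (simp add: mult.assoc)
  also have "\<dots> = Ti * a * (d * di)" unfolding TS by (simp add: mult.assoc)
  finally show ?thesis using assms by simp
qed

lemma case11:
  fixes a b c d ai di S T :: "'r::ring_1"
  assumes "a * ai = 1" "ai * a = 1" "d * di = 1" "di * d = 1"
    and S: "S = a - b * di * c" and T: "T = d - c * ai * b"
    and ab: "a * b = b * a" and cd: "c * d = d * c" and x: "d * a - a * d = c * b - b * c"
  shows "S * d = T * a"
proof -
  have e1: "S * d = a * d - b * c"
  proof -
    have "S * d = a * d - b * di * (c * d)" unfolding S by (simp add: algebra_simps)
    also have "b * di * (c * d) = b * (di * d) * c" unfolding cd by (simp add: mult.assoc)
    finally show ?thesis using assms(4) by simp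
  qed
  have e2: "T * a = d * a - c * b"
  proof -
    have "T * a = d * a - c * ai * (b * a)" unfolding T by (simp add: algebra_simps)
    also have "c * ai * (b * a) = c * (ai * a) * b" unfolding ab[symmetric] by (simp add: mult.assoc)
    finally show ?thesis using assms(2) by simp
  qed
  have "S * d - T * a = (c * b - b * c) - (d * a - a * d)" unfolding e1 e2 by (simp add: algebra_simps)
  also have "\<dots> = 0" unfolding x by simp
  finally show ?thesis by simp
qed


lemma half_zero:
  fixes w :: "'a::real_algebra_1 fps"
  assumes "w + w = 0" shows "w = 0"
proof (rule fps_ext)
  fix n
  have "fps_nth w n + fps_nth w n = 0" using arg_cong[OF assms, of "\<lambda>f. fps_nth f n"] by simp
  hence "(2::real) *\<^sub>R fps_nth w n = 0" by (simp add: scaleR_2)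
  thus "fps_nth w n = fps_nth 0 n" by simp
qed

lemma SMr_rel: "SMr K p N \<Longrightarrow> i < K \<Longrightarrow> k < K \<Longrightarrow> j < K \<Longrightarrow> l < K \<Longrightarrow> Rel (Vc p N) p i k j l = 0"
  unfolding SMr_def by blast

lemma rels:
  fixes N :: "nat \<Rightarrow> nat \<Rightarrow> 'a::real_algebra_1 fps"
  assumes S: "SMr K p N" and x: "x < K" and y: "y < K"
  defines "a \<equiv> N x x" and "b \<equiv> N x y" and "c \<equiv> N y x" and "d \<equiv> N y y"
  shows "p x = 0 \<Longrightarrow> a * c = c * a"
    and "p y = 0 \<Longrightarrow> b * d = d * b"
    and "p x = 1 \<Longrightarrow> a * b = b * a"
    and "p y = 1 \<Longrightarrow> c * d = d * c"
    and "p x = 0 \<Longrightarrow> p y = 1 \<Longrightarrow> c * c = 0"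
    and "p x = 1 \<Longrightarrow> p y = 0 \<Longrightarrow> b * b = 0"
    and "p x = 0 \<Longrightarrow> p y = 0 \<Longrightarrow> d * a - a * d = b * c - c * b"
    and "p x = 0 \<Longrightarrow> p y = 1 \<Longrightarrow> d * a - a * d = - (b * c + c * b)"
    and "p x = 1 \<Longrightarrow> p y = 0 \<Longrightarrow> d * a - a * d = b * c + c * b"
    and "p x = 1 \<Longrightarrow> p y = 1 \<Longrightarrow> d * a - a * d = c * b - b * c"
proof -
  note R = SMr_rel[OF S]
  show "a * c = c * a" if px: "p x = 0"
  proof -
    have "Rel (Vc p N) p x y x x = (c * a - a * c) + (c * a - a * c)"
      unfolding Rel_def Vc_def a_def c_def using px by (simp add: sg_def algebra_simps)
    hence "(c * a - a * c) + (c * a - a * c) = 0" using R[OF x y x x] by simp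
    hence "c * a - a * c = 0" by (rule half_zero)
    thus ?thesis by simp
  qed
  show "b * d = d * b" if py: "p y = 0"
  proof -
    have "Rel (Vc p N) p x y y y = (d * b - b * d) + (d * b - b * d)"
      unfolding Rel_def Vc_def b_def d_def using py by (simp add: sg_def algebra_simps)
    hence "(d * b - b * d) + (d * b - b * d) = 0" using R[OF x y y y] by simp
    hence "d * b - b * d = 0" by (rule half_zero)
    thus ?thesis by simp
  qed
  show "a * b = b * a" if px: "p x = 1"
  proof -
    have "Rel (Vc p N) p x x x y = (a * b - b * a) + (a * b - b * a) \<or> Rel (Vc p N) p x x x y = (b * a - a * b) + (b * a - a * b)"
      unfolding Rel_def Vc_def a_def b_def using px by (cases "p y = 0") (simp_all add: sg_def algebra_simps)
    hence "(a * b - b * a) + (a * b - b * a) = 0 \<or> (b * a - a * b) + (b * a - a * b) = 0" using R[OF x x x y] by auto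
    hence "a * b - b * a = 0 \<or> b * a - a * b = 0" using half_zero by blast
    thus ?thesis by auto
  qed
  show "c * d = d * c" if py: "p y = 1"
  proof -
    have "Rel (Vc p N) p y y x y = (d * c - c * d) + (d * c - c * d)"
      unfolding Rel_def Vc_def c_def d_def using py by (cases "p x = 0") (simp_all add: sg_def algebra_simps)
    hence "(d * c - c * d) + (d * c - c * d) = 0" using R[OF y y x y] by simp
    hence "d * c - c * d = 0" by (rule half_zero)
    thus ?thesis by simp
  qed
  show "c * c = 0" if px: "p x = 0" and py: "p y = 1"
  proof -
    have "Rel (Vc p N) p y y x x = - ((c * c + c * c) + (c * c + c * c))"
      unfolding Rel_def Vc_def c_def using px py by (simp add: sg_def algebra_simps)
    hence "(c * c + c * c) + (c * c + c * c) = 0" using R[OF y y x x] by (metis neg_equal_0_iff_equal)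
    thus ?thesis using half_zero by blast
  qed
  show "b * b = 0" if px: "p x = 1" and py: "p y = 0"
  proof -
    have "Rel (Vc p N) p x x y y = - ((b * b + b * b) + (b * b + b * b))"
      unfolding Rel_def Vc_def b_def using px py by (simp add: sg_def algebra_simps)
    hence "(b * b + b * b) + (b * b + b * b) = 0" using R[OF x x y y] by (metis neg_equal_0_iff_equal)
    thus ?thesis using half_zero by blast
  qed
  show "d * a - a * d = b * c - c * b" if px: "p x = 0" and py: "p y = 0"
  proof -
    have "Rel (Vc p N) p x y x y = (d * a - a * d) - (b * c - c * b)"
      unfolding Rel_def Vc_def a_def b_def c_def d_def using px py by (simp add: sg_def algebra_simps)
    thus ?thesis using R[OF x y x y] by simp
  qed
  show "d * a - a * d = - (b * c + c * b)" if px: "p x = 0" and py: "p y = 1"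
  proof -
    have "Rel (Vc p N) p x y x y = (d * a - a * d) + (b * c + c * b)"
      unfolding Rel_def Vc_def a_def b_def c_def d_def using px py by (simp add: sg_def algebra_simps)
    hence "(d * a - a * d) + (b * c + c * b) = 0" using R[OF x y x y] by simp
    thus ?thesis by (simp only: eq_neg_iff_add_eq_0)
  qed
  show "d * a - a * d = b * c + c * b" if px: "p x = 1" and py: "p y = 0"
  proof -
    have "Rel (Vc p N) p x y x y = (d * a - a * d) - (b * c + c * b)"
      unfolding Rel_def Vc_def a_def b_def c_def d_def using px py by (simp add: sg_def algebra_simps)
    thus ?thesis using R[OF x y x y] by simp
  qed
  show "d * a - a * d = c * b - b * c" if px: "p x = 1" and py: "p y = 1"
  proof -
    have "Rel (Vc p N) p x y x y = (d * a - a * d) - (c * b - b * c)"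
      unfolding Rel_def Vc_def a_def b_def c_def d_def using px py by (simp add: sg_def algebra_simps)
    thus ?thesis using R[OF x y x y] by simp
  qed
qed


lemma UNI_mono: "UNI {..<K} X \<Longrightarrow> K' \<le> (K::nat) \<Longrightarrow> UNI {..<K'} X"
  unfolding UNI_def by (meson lessThan_iff order_less_le_trans)

lemma SMc_mono: "SMc K p X \<Longrightarrow> K' \<le> (K::nat) \<Longrightarrow> SMc K' p X"
  unfolding SMc_def by auto

lemma UNI_perm:
  assumes "UNI {..<K} X" "\<rho> permutes {..<K}"
  shows "UNI {..<K} (\<lambda>i j. X (\<rho> i) (\<rho> j))"
proof -
  have r: "\<rho> i < K \<longleftrightarrow> i < K" for i using assms(2) by (metis lessThan_iff permutes_in_image)
  have inj: "\<rho> i = \<rho> j \<longleftrightarrow> i = j" for i j using assms(2) by (metis permutes_inj injD)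
  show ?thesis using assms(1) unfolding UNI_def by (simp add: r inj)
qed

lemma rinv_rinv:
  fixes x :: "'a::ring_1"
  assumes "x * y = 1" "y * x = 1"
  shows "rinv (rinv x) = x"
proof -
  have "rinv x = y" by (rule rinv_eq[OF assms])
  thus ?thesis using rinv_eq[OF assms(2,1)] by simp
qed

definition Bf :: "(nat \<Rightarrow> nat) \<Rightarrow> (nat \<Rightarrow> nat \<Rightarrow> 'a::ring_1) \<Rightarrow> nat \<Rightarrow> 'a" where
  "Bf s X i = (if s i = 0 then qminor (Suc i) X else rinv (qminor (Suc i) X))"

lemma Ber_Bf: "Ber N s X = prod_list (map (Bf s X) [0..<N])"
  unfolding Ber_def Bf_def by simp

lemma middle:
  fixes X :: "nat \<Rightarrow> nat \<Rightarrow> 'a::real_algebra_1 fps"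
  assumes U: "UNI {..<Suc (Suc k)} X" and S: "SMc (Suc (Suc k)) p X" and P: "\<And>i. p i \<le> 1"
  defines "\<tau> \<equiv> Transposition.transpose k (Suc k)"
  shows "Bf (\<lambda>i. p (\<tau> i)) (\<lambda>i j. X (\<tau> i) (\<tau> j)) k * Bf (\<lambda>i. p (\<tau> i)) (\<lambda>i j. X (\<tau> i) (\<tau> j)) (Suc k)
       = Bf p X k * Bf p X (Suc k)"
proof -
  define K2 where "K2 = Suc (Suc k)"
  define N where "N = mat_inv K2 X"
  define X' where "X' = (\<lambda>i j. X (\<tau> i) (\<tau> j))"
  have tp: "\<tau> permutes {..<K2}" unfolding \<tau>_def K2_def by (rule permutes_swap_id) auto
  have U2: "UNI {..<K2} X" using U unfolding K2_def .
  have E: "minvP K2 X N" "UNI {..<K2} N" using mat_inv_exists[OF U2] unfolding N_def by auto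
  have SM: "SMr K2 p N"
    by (rule inv_SM[OF U2 S[folded K2_def]]) (use minvP_facts(2)[OF E(1)] in auto)
  define a where "a = N k k"
  define b where "b = N k (Suc k)"
  define c where "c = N (Suc k) k"
  define d where "d = N (Suc k) (Suc k)"
  have xk: "k < K2" "Suc k < K2" unfolding K2_def by auto
  have a0: "fps_nth a 0 = 1" and d0: "fps_nth d 0 = 1" and b0: "fps_nth b 0 = 0" and c0: "fps_nth c 0 = 0"
    using E(2) xk unfolding UNI_def a_def b_def c_def d_def by auto
  define ai where "ai = rinv a"
  define di where "di = rinv d"
  have ai: "a * ai = 1" "ai * a = 1" "fps_nth ai 0 = 1" using fps_unit_inv[OF a0] unfolding ai_def by auto
  have di: "d * di = 1" "di * d = 1" "fps_nth di 0 = 1" using fps_unit_inv[OF d0] unfolding di_def by auto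
  define Sx where "Sx = a - b * di * c"
  define Tx where "Tx = d - c * ai * b"
  have S0: "fps_nth Sx 0 = 1" unfolding Sx_def using a0 b0 by simp
  have T0: "fps_nth Tx 0 = 1" unfolding Tx_def using d0 c0 by simp
  define Si where "Si = rinv Sx"
  define Ti where "Ti = rinv Tx"
  have Si: "Sx * Si = 1" "Si * Sx = 1" using fps_unit_inv[OF S0] unfolding Si_def by auto
  have Ti: "Tx * Ti = 1" "Ti * Tx = 1" using fps_unit_inv[OF T0] unfolding Ti_def by auto
  have q1: "qminor (Suc k) X = Si"
  proof -
    have "mat_inv (Suc k) X k k = Sx"
      using mat_inv_block[OF U2[unfolded K2_def], of k k] unfolding Sx_def a_def b_def c_def d_def di_def N_def K2_def
      by simp
    thus ?thesis unfolding qminor_def Si_def by simp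
  qed
  have q2: "qminor (Suc (Suc k)) X = di"
    unfolding qminor_def di_def d_def N_def K2_def by simp
  have U2': "UNI {..<K2} X'" unfolding X'_def by (rule UNI_perm[OF U2 tp])
  have N': "mat_inv K2 X' = (\<lambda>i j. N (\<tau> i) (\<tau> j))" unfolding X'_def N_def by (rule mat_inv_perm[OF U2 tp])
  have tk: "\<tau> k = Suc k" "\<tau> (Suc k) = k" unfolding \<tau>_def by auto
  have q1': "qminor (Suc k) X' = Ti"
  proof -
    have "mat_inv (Suc k) X' k k = Tx"
      using mat_inv_block[OF U2'[unfolded K2_def], of k k] N'[unfolded K2_def]
      unfolding Tx_def a_def b_def c_def d_def ai_def by (simp add: tk)
    thus ?thesis unfolding qminor_def Ti_def by simp
  qed
  have q2': "qminor (Suc (Suc k)) X' = ai"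
    using N'[unfolded K2_def] unfolding qminor_def ai_def a_def N_def K2_def by (simp add: tk)
  have rS: "rinv Si = Sx" using rinv_eq[OF Si(2,1)] unfolding Si_def .
  have rT: "rinv Ti = Tx" using rinv_eq[OF Ti(2,1)] unfolding Ti_def .
  have ra: "rinv ai = a" using rinv_eq[OF ai(2,1)] unfolding ai_def .
  have rd: "rinv di = d" using rinv_eq[OF di(2,1)] unfolding di_def .
  note R = rels[OF SM xk, folded a_def b_def c_def d_def]
  have LHS: "Bf (\<lambda>i. p (\<tau> i)) X' k * Bf (\<lambda>i. p (\<tau> i)) X' (Suc k) =
    (if p (Suc k) = 0 then Ti else Tx) * (if p k = 0 then ai else a)"
    unfolding Bf_def q1' q2' rT ra by (simp add: tk)
  have RHS: "Bf p X k * Bf p X (Suc k) = (if p k = 0 then Si else Sx) * (if p (Suc k) = 0 then di else d)"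
    unfolding Bf_def q1 q2 rS rd by simp
  have pk: "p k = 0 \<or> p k = 1" and psk: "p (Suc k) = 0 \<or> p (Suc k) = 1" using P[of k] P[of "Suc k"] by auto
  have "(if p (Suc k) = 0 then Ti else Tx) * (if p k = 0 then ai else a)
      = (if p k = 0 then Si else Sx) * (if p (Suc k) = 0 then di else d)"
  proof -
    consider "p k = 0" "p (Suc k) = 0" | "p k = 0" "p (Suc k) = 1" | "p k = 1" "p (Suc k) = 0" | "p k = 1" "p (Suc k) = 1"
    proof (cases "p k = 0")
      case True
      thus ?thesis using that(1,2) psk by (cases "p (Suc k) = 0") simp_all
    next
      case False
      hence "p k = 1" using pk by simp
      thus ?thesis using that(3,4) psk by (cases "p (Suc k) = 0") simp_all
    qed
    thus ?thesis
    proof cases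
      case 1
      have "Si * di = Ti * ai"
        by (rule case00[OF ai(1,2) di(1,2) Sx_def Tx_def Si Ti]) (use R 1 in auto)
      thus ?thesis using 1 by simp
    next
      case 2
      have "Si * d = Tx * ai"
        by (rule case01[OF ai(1,2) di(1,2) Sx_def Tx_def Si]) (use R 2 in auto)
      thus ?thesis using 2 by simp
    next
      case 3
      have "Sx * di = Ti * a"
        by (rule case10[OF ai(1,2) di(1,2) Sx_def Tx_def Ti]) (use R 3 in auto)
      thus ?thesis using 3 by simp
    next
      case 4
      have "Sx * d = Tx * a"
        by (rule case11[OF ai(1,2) di(1,2) Sx_def Tx_def]) (use R 4 in auto)
      thus ?thesis using 4 by simp
    qed
  qed
  thus ?thesis using LHS RHS unfolding X'_def by simp
qed


lemma Ber_adj: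
  fixes X :: "nat \<Rightarrow> nat \<Rightarrow> 'a::real_algebra_1 fps"
  assumes U: "UNI {..<Kt} X" and S: "SMc Kt p X" and P: "\<And>i. p i \<le> 1" and k: "Suc k < Kt"
  shows "Ber Kt (\<lambda>i. p (Transposition.transpose k (Suc k) i))
     (\<lambda>i j. X (Transposition.transpose k (Suc k) i) (Transposition.transpose k (Suc k) j)) = Ber Kt p X"
proof -
  define \<tau> where "\<tau> = Transposition.transpose k (Suc k)"
  define s' where "s' = (\<lambda>i. p (\<tau> i))"
  define X' where "X' = (\<lambda>i j. X (\<tau> i) (\<tau> j))"
  have L: "[0..<Kt] = [0..<k] @ k # Suc k # [Suc (Suc k)..<Kt]"
  proof -
    have "[0..<Kt] = [0..<k] @ [k..<Kt]" using upt_add_eq_append[of 0 k "Kt - k"] k by simp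
    moreover have "[k..<Kt] = k # Suc k # [Suc (Suc k)..<Kt]" using k by (simp add: upt_conv_Cons)
    ultimately show ?thesis by simp
  qed
  have pre: "map (Bf s' X') [0..<k] = map (Bf p X) [0..<k]"
  proof (rule map_cong[OF refl])
    fix i assume "i \<in> set [0..<k]"
    hence i: "i < k" by simp
    have ti: "\<tau> i = i" unfolding \<tau>_def using i by simp
    have "mat_inv (Suc i) X' = mat_inv (Suc i) X"
    proof (rule mat_inv_cong)
      fix a b assume "a < Suc i" "b < Suc i"
      hence "\<tau> a = a" "\<tau> b = b" unfolding \<tau>_def using i by auto
      thus "X' a b = X a b" unfolding X'_def by simp
    qed
    thus "Bf s' X' i = Bf p X i" unfolding Bf_def qminor_def s'_def ti by simp
  qed
  have suf: "map (Bf s' X') [Suc (Suc k)..<Kt] = map (Bf p X) [Suc (Suc k)..<Kt]"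
  proof (rule map_cong[OF refl])
    fix i assume "i \<in> set [Suc (Suc k)..<Kt]"
    hence i: "Suc (Suc k) \<le> i" "i < Kt" by auto
    have ti: "\<tau> i = i" unfolding \<tau>_def using i by simp
    have tp: "\<tau> permutes {..<Suc i}" unfolding \<tau>_def by (rule permutes_swap_id) (use i in auto)
    have "mat_inv (Suc i) X' = (\<lambda>a b. mat_inv (Suc i) X (\<tau> a) (\<tau> b))"
      unfolding X'_def by (rule mat_inv_perm[OF UNI_mono[OF U] tp]) (use i in auto)
    thus "Bf s' X' i = Bf p X i" unfolding Bf_def qminor_def s'_def by (simp add: ti)
  qed
  have mid: "Bf s' X' k * Bf s' X' (Suc k) = Bf p X k * Bf p X (Suc k)"
    unfolding s'_def X'_def \<tau>_def
    by (rule middle[OF UNI_mono[OF U] SMc_mono[OF S] P]) (use k in auto)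
  have "Ber Kt s' X' = prod_list (map (Bf s' X') [0..<k]) * ((Bf s' X' k * Bf s' X' (Suc k)) * prod_list (map (Bf s' X') [Suc (Suc k)..<Kt]))"
    unfolding Ber_Bf L by (simp add: mult.assoc)
  also have "\<dots> = prod_list (map (Bf p X) [0..<k]) * ((Bf p X k * Bf p X (Suc k)) * prod_list (map (Bf p X) [Suc (Suc k)..<Kt]))"
    unfolding pre suf mid ..
  also have "\<dots> = Ber Kt p X"
    unfolding Ber_Bf L by (simp add: mult.assoc)
  finally show ?thesis unfolding s'_def X'_def \<tau>_def .
qed

lemma SMc_perm:
  assumes S: "SMc K p X" and sp: "\<sigma> permutes {..<K}"
  shows "SMc K (\<lambda>i. p (\<sigma> i)) (\<lambda>i j. X (\<sigma> i) (\<sigma> j))"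
proof -
  have r: "\<sigma> i < K" if "i < K" for i using sp that by (metis lessThan_iff permutes_in_image)
  show ?thesis unfolding SMc_def
  proof (intro allI impI)
    fix i k j l assume h: "i < K" "k < K" "j < K" "l < K"
    have "Rel (Yc p X) p (\<sigma> i) (\<sigma> k) (\<sigma> j) (\<sigma> l) = 0"
      using S[unfolded SMc_def, rule_format, OF r[OF h(1)] r[OF h(2)] r[OF h(3)] r[OF h(4)]] .
    thus "Rel (Yc (\<lambda>i. p (\<sigma> i)) (\<lambda>i j. X (\<sigma> i) (\<sigma> j))) (\<lambda>i. p (\<sigma> i)) i k j l = 0"
      unfolding Rel_def Yc_def by simp
  qed
qed

lemma transpose_conj:
  assumes "Suc a < b"
  shows "Transposition.transpose a b = Transposition.transpose a (Suc a) \<circ> Transposition.transpose (Suc a) b \<circ> Transposition.transpose a (Suc a)"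
proof (rule ext)
  fix x
  show "Transposition.transpose a b x = (Transposition.transpose a (Suc a) \<circ> Transposition.transpose (Suc a) b \<circ> Transposition.transpose a (Suc a)) x"
    using assms by (cases "x = a"; cases "x = Suc a"; cases "x = b") (auto simp: Transposition.transpose_def)
qed

lemma Ber_perm:
  fixes X :: "nat \<Rightarrow> nat \<Rightarrow> 'a::real_algebra_1 fps"
  assumes U: "UNI {..<Kt} X" and S: "SMc Kt p X" and P: "\<And>i. p i \<le> 1" and sp: "\<rho> permutes {..<Kt}"
  shows "Ber Kt (\<lambda>i. p (\<rho> i)) (\<lambda>i j. X (\<rho> i) (\<rho> j)) = Ber Kt p X"
proof -
  define F where "F = (\<lambda>\<rho>. Ber Kt (\<lambda>i. p (\<rho> i)) (\<lambda>i j. X (\<rho> i) (\<rho> j)))"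
  define G where "G = {\<rho>. \<rho> permutes {..<Kt} \<and> (\<forall>\<sigma>. \<sigma> permutes {..<Kt} \<longrightarrow> F (\<sigma> \<circ> \<rho>) = F \<sigma>)}"
  have comp: "r1 \<circ> r2 \<in> G" if "r1 \<in> G" "r2 \<in> G" for r1 r2
  proof -
    have p1: "r1 permutes {..<Kt}" and p2: "r2 permutes {..<Kt}" using that unfolding G_def by auto
    have "F (\<sigma> \<circ> (r1 \<circ> r2)) = F \<sigma>" if "\<sigma> permutes {..<Kt}" for \<sigma>
    proof -
      have "\<sigma> \<circ> r1 permutes {..<Kt}" by (rule permutes_compose[OF p1 that])
      hence "F ((\<sigma> \<circ> r1) \<circ> r2) = F (\<sigma> \<circ> r1)" using \<open>r2 \<in> G\<close> unfolding G_def by blast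
      also have "\<dots> = F \<sigma>" using \<open>r1 \<in> G\<close> that unfolding G_def by blast
      finally show ?thesis by (simp add: o_assoc)
    qed
    thus ?thesis unfolding G_def using permutes_compose[OF p2 p1] by blast
  qed
  have adj: "Transposition.transpose k (Suc k) \<in> G" if "Suc k < Kt" for k
  proof -
    have "Transposition.transpose k (Suc k) permutes {..<Kt}" by (rule permutes_swap_id) (use that in auto)
    moreover have "F (\<sigma> \<circ> Transposition.transpose k (Suc k)) = F \<sigma>" if sp: "\<sigma> permutes {..<Kt}" for \<sigma>
    proof -
      have "Ber Kt (\<lambda>i. p (\<sigma> (Transposition.transpose k (Suc k) i)))
         (\<lambda>i j. X (\<sigma> (Transposition.transpose k (Suc k) i)) (\<sigma> (Transposition.transpose k (Suc k) j)))
         = Ber Kt (\<lambda>i. p (\<sigma> i)) (\<lambda>i j. X (\<sigma> i) (\<sigma> j))"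
        by (rule Ber_adj[OF UNI_perm[OF U sp] SMc_perm[OF S sp]]) (use P \<open>Suc k < Kt\<close> in auto)
      thus ?thesis unfolding F_def by simp
    qed
    ultimately show ?thesis unfolding G_def by blast
  qed
  have idG: "id \<in> G" unfolding G_def by (simp add: permutes_id)
  have trans: "Transposition.transpose a b \<in> G" if "a < Kt" "b < Kt" for a b
  proof -
    have main: "Transposition.transpose a (a + Suc d) \<in> G" if "a + Suc d < Kt" for a d
      using that
    proof (induction d arbitrary: a)
      case 0 thus ?case using adj by simp
    next
      case (Suc d)
      have "Transposition.transpose (Suc a) (Suc a + Suc d) \<in> G" using Suc.IH[of "Suc a"] Suc.prems by simp
      moreover have "Transposition.transpose a (Suc a) \<in> G" using adj Suc.prems by simp
      ultimately have "Transposition.transpose a (Suc a) \<circ> Transposition.transpose (Suc a) (Suc a + Suc d) \<circ> Transposition.transpose a (Suc a) \<in> G"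
        using comp by blast
      moreover have "Transposition.transpose a (a + Suc (Suc d)) = Transposition.transpose a (Suc a) \<circ> Transposition.transpose (Suc a) (Suc a + Suc d) \<circ> Transposition.transpose a (Suc a)"
        using transpose_conj[of a "a + Suc (Suc d)"] by simp
      ultimately show ?case by (simp only:)
    qed
    show ?thesis
    proof (cases a b rule: linorder_cases)
      case less
      obtain d where "b = Suc (a + d)" using less_imp_Suc_add[OF less] by blast
      thus ?thesis using main[of a d] that by simp
    next
      case equal thus ?thesis using idG by simp
    next
      case greater
      obtain d where "a = Suc (b + d)" using less_imp_Suc_add[OF greater] by blast
      thus ?thesis using main[of b d] that by (simp add: transpose_commute)
    qed
  qed
  have "\<rho> \<in> G" using sp finite_lessThan
  proof (induction rule: permutes_induct)
    case id thus ?case by (rule idG)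
  next
    case (swap a b p)
    hence h: "a < Kt" "b < Kt" "p \<in> G" by auto
    show ?case by (rule comp[OF trans[OF h(1,2)] h(3)])
  qed
  hence "F (id \<circ> \<rho>) = F id" using permutes_id unfolding G_def by blast
  thus ?thesis unfolding F_def by simp
qed


definition Tm :: "nat \<Rightarrow> (nat \<Rightarrow> nat \<Rightarrow> nat \<Rightarrow> 'a::ring_1) \<Rightarrow> 'a \<Rightarrow> nat \<Rightarrow> nat \<Rightarrow> 'a" where
  "Tm m e tau i j = (if i = j then tau else 0) + (-1) ^ par m i * e i j 1"

lemma par01: "par m i = 0 \<or> par m i = 1" unfolding par_def by auto
lemma par_le1: "par m i \<le> 1" unfolding par_def by auto

lemma oneuT_nth: "fps_nth (oneuT m e tau i j) d =
   (if d = 0 then (if i = j then 1 else 0) else if d = 1 then Tm m e tau i j else 0)"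
  unfolding oneuT_def Tm_def by simp

lemma UNI_oneuT: "UNI {..<K} (oneuT m e tau)"
  unfolding UNI_def oneuT_nth by simp

lemma prod_nth:
  "fps_nth (oneuT m e tau i j * oneuT m e tau k l) d =
    (if d = 0 then (if i = j then 1 else 0) * (if k = l then 1 else 0)
     else if d = 1 then (if i = j then 1 else 0) * Tm m e tau k l + Tm m e tau i j * (if k = l then 1 else 0)
     else if d = 2 then Tm m e tau i j * Tm m e tau k l else 0)"
proof -
  let ?A = "oneuT m e tau i j" and ?B = "oneuT m e tau k l"
  have s: "fps_nth (?A * ?B) d = (\<Sum>t=0..d. fps_nth ?A t * fps_nth ?B (d - t))" by (rule fps_mult_nth)
  consider "d = 0" | "d = 1" | "d = 2" | "d \<ge> 3" by linarith
  thus ?thesis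
  proof cases
    case 1 thus ?thesis using s by (simp add: oneuT_nth)
  next
    case 2 thus ?thesis using s by (simp add: oneuT_nth)
  next
    case 3
    have "{0..d} = {0, 1, 2::nat}" using 3 by auto
    thus ?thesis using s 3 by (simp add: oneuT_nth)
  next
    case 4
    have "fps_nth ?A t * fps_nth ?B (d - t) = 0" if "t \<in> {0..d}" for t
    proof (cases "t \<ge> 2")
      case True thus ?thesis by (simp add: oneuT_nth)
    next
      case False hence "d - t \<noteq> 0" "d - t \<noteq> 1" using 4 by auto
      thus ?thesis by (simp add: oneuT_nth)
    qed
    hence "fps_nth (?A * ?B) d = 0" unfolding s by (rule sum.neutral[OF ballI])
    thus ?thesis using 4 by simp
  qed
qed

lemma fps_nth_sg_left: "fps_nth (sg n * w) d = sg n * fps_nth (w :: 'a::ring_1 fps) d"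
  unfolding sg_def by simp
lemma fps_nth_sg_right: "fps_nth (w * sg n) d = fps_nth (w :: 'a::ring_1 fps) d * sg n"
  unfolding sg_def by simp

lemma Rel_nth: "fps_nth (Rel f p i k j l) d = Rel (\<lambda>a b c e. fps_nth (f a b c e) d) p i k j l"
  unfolding Rel_def by (simp add: fps_nth_sg_left fps_nth_sg_right)

lemma Yc_nth: "fps_nth (Yc p M i k j l) d = sg (p j * (p k + p l)) * fps_nth (M i j * M k l) d"
  unfolding Yc_def by (simp add: fps_nth_sg_left)


lemma m1_comm: "(-1) ^ n * (x::'a::ring_1) = x * (-1) ^ n"
  by (cases "even n") auto

lemma m1_pull1: "(x::'a::ring_1) * ((-1) ^ n * y) = (-1) ^ n * (x * y)"
  by (metis m1_comm mult.assoc)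
lemma m1_pull2: "(x::'a::ring_1) * (-1) ^ n = (-1) ^ n * x"
  by (rule m1_comm[symmetric])

lemma SC:
  fixes e :: "nat \<Rightarrow> nat \<Rightarrow> nat \<Rightarrow> 'a::ring_1"
  assumes G: "gen_rels m n e tau" and idx: "i < m + n" "j < m + n" "k < m + n" "l < m + n"
  shows "Tm m e tau i j * Tm m e tau k l - (-1) ^ ((par m i + par m j) * (par m k + par m l)) * (Tm m e tau k l * Tm m e tau i j)
    = (if i = j then (-1) ^ par m k * e k l 2 else 0) - (if k = l then (-1) ^ par m i * e i j 2 else 0)
      + (-1) ^ par m i * ((-1) ^ par m k * ((if j = k then e i l 2 else 0)
          - (-1) ^ ((par m i + par m j) * (par m k + par m l)) * (if l = i then e k j 2 else 0)))"
proof -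
  define \<epsilon> :: 'a where "\<epsilon> = (-1) ^ ((par m i + par m j) * (par m k + par m l))"
  define si :: 'a where "si = (-1) ^ par m i"
  define sk :: 'a where "sk = (-1) ^ par m k"
  have G1: "e i j 1 * e k l 1 - \<epsilon> * (e k l 1 * e i j 1) = (if j = k then e i l 2 else 0) - \<epsilon> * (if l = i then e k j 2 else 0)"
    using G idx unfolding gen_rels_def \<epsilon>_def by (simp add: numeral_2_eq_2)
  have G2: "tau * e a b 1 - e a b 1 * tau = e a b 2" if "a < m + n" "b < m + n" for a b
    using G that unfolding gen_rels_def by (simp add: numeral_2_eq_2)
  have eps1: "\<epsilon> = 1" if "i = j \<or> k = l"
    using that unfolding \<epsilon>_def by (auto intro!: neg_one_even_power)
  have D: "Tm m e tau i j * Tm m e tau k l - \<epsilon> * (Tm m e tau k l * Tm m e tau i j)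
     = (if i = j then sk * (tau * e k l 1 - e k l 1 * tau) else 0) - (if k = l then si * (tau * e i j 1 - e i j 1 * tau) else 0)
       + si * (sk * (e i j 1 * e k l 1 - \<epsilon> * (e k l 1 * e i j 1)))"
    (is "?L = ?R")
  proof -
    have T1: "Tm m e tau i j = (if i = j then tau else 0) + si * e i j 1" unfolding Tm_def si_def ..
    have T2: "Tm m e tau k l = (if k = l then tau else 0) + sk * e k l 1" unfolding Tm_def sk_def ..
    have si01: "si = 1 \<or> si = -1" unfolding si_def using par01[of m i] by auto
    have sk01: "sk = 1 \<or> sk = -1" unfolding sk_def using par01[of m k] by auto
    consider "i = j" "k = l" | "i = j" "k \<noteq> l" | "i \<noteq> j" "k = l" | "i \<noteq> j" "k \<noteq> l" by metis
    thus ?thesis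
    proof cases
      case 1 thus ?thesis unfolding T1 T2 using eps1 si01 sk01 by (elim disjE; simp add: algebra_simps)
    next
      case 2 thus ?thesis unfolding T1 T2 using eps1 si01 sk01 by (elim disjE; simp add: algebra_simps)
    next
      case 3 thus ?thesis unfolding T1 T2 using eps1 si01 sk01 by (elim disjE; simp add: algebra_simps)
    next
      case 4 thus ?thesis unfolding T1 T2 using si01 sk01 by (elim disjE; simp add: algebra_simps)
    qed
  qed
  show ?thesis unfolding \<epsilon>_def[symmetric] si_def[symmetric] sk_def[symmetric] D G1 G2[OF idx(3,4)] G2[OF idx(1,2)]
    by simp
qed


lemma SMc_oneuT:
  fixes e :: "nat \<Rightarrow> nat \<Rightarrow> nat \<Rightarrow> 'a::ring_1"
  assumes G: "gen_rels m n e tau"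
  shows "SMc (m + n) (par m) (oneuT m e tau)"
  unfolding SMc_def
proof (intro allI impI)
  fix i k j l assume idx: "i < m + n" "k < m + n" "j < m + n" "l < m + n"
  let ?p = "par m" and ?X = "oneuT m e tau" and ?T = "Tm m e tau"
  show "Rel (Yc ?p ?X) ?p i k j l = 0"
  proof (rule fps_ext)
    fix d
    have E: "fps_nth (Rel (Yc ?p ?X) ?p i k j l) d =
      Rel (\<lambda>a b c f. sg (?p c * (?p b + ?p f)) * fps_nth (?X a c * ?X b f) d) ?p i k j l"
      unfolding Rel_nth Yc_nth ..
    have pi: "?p i = 0 \<or> ?p i = 1" and pk: "?p k = 0 \<or> ?p k = 1" and pj: "?p j = 0 \<or> ?p j = 1" and pl: "?p l = 0 \<or> ?p l = 1"
      using par01 by auto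
    consider "d = 0" | "d = 1" | "d = 2" | "d \<ge> 3" by linarith
    hence "Rel (\<lambda>a b c f. sg (?p c * (?p b + ?p f)) * fps_nth (?X a c * ?X b f) d) ?p i k j l = 0"
    proof cases
      case 1
      thus ?thesis unfolding prod_nth
        by (cases "i = j"; cases "k = l"; cases "i = l"; cases "k = j"; insert pi pk pj pl; elim disjE; simp add: Rel_def sg_def)
    next
      case 2
      thus ?thesis unfolding prod_nth
        by (cases "i = j"; cases "k = l"; cases "i = l"; cases "k = j"; insert pi pk pj pl; elim disjE; simp add: Rel_def sg_def algebra_simps)
    next
      case 3
      define \<epsilon>1 :: 'a where "\<epsilon>1 = (-1) ^ ((?p i + ?p j) * (?p k + ?p l))"
      define \<epsilon>2 :: 'a where "\<epsilon>2 = (-1) ^ ((?p i + ?p l) * (?p k + ?p j))"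
      have R: "Rel (\<lambda>a b c f. sg (?p c * (?p b + ?p f)) * (?T a c * ?T b f)) ?p i k j l
        = sg (?p j * (?p k + ?p l)) * (?T i j * ?T k l - \<epsilon>1 * (?T k l * ?T i j))
          + sg (?p j * ?p l) * sg (?p l * (?p k + ?p j)) * (?T i l * ?T k j - \<epsilon>2 * (?T k j * ?T i l))"
        unfolding \<epsilon>1_def \<epsilon>2_def using pi pk pj pl
        by (elim disjE; simp add: Rel_def sg_def algebra_simps)
      note S1 = SC[OF G idx(1,3,2,4), folded \<epsilon>1_def]
      note S2 = SC[OF G idx(1,4,2,3), folded \<epsilon>2_def]
      define A1 :: 'a where "A1 = sg (?p j * (?p k + ?p l))"
      define B1 :: 'a where "B1 = sg (?p j * ?p l) * sg (?p l * (?p k + ?p j))"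
      define si :: 'a where "si = (-1) ^ ?p i"
      define sk :: 'a where "sk = (-1) ^ ?p k"
      have ab: "A * (a1 - a2 + s * (t * (a3 - ee * a4))) + B * (b1 - b2 + s * (t * (b3 - f * b4)))
        = (A * a1 - B * (s * (t * (f * b4)))) + (B * (s * (t * b3)) - A * a2) + (A * (s * (t * a3)) - B * b2)
          + (B * b1 - A * (s * (t * (ee * a4))))" for A B a1 a2 a3 a4 b1 b2 b3 b4 s t ee f :: 'a
        by (simp add: algebra_simps)
      have g1: "A1 * (if i = j then sk * e k l 2 else 0) - B1 * (si * (sk * (\<epsilon>2 * (if j = i then e k l 2 else 0)))) = 0"
      proof (cases "i = j")
        case True thus ?thesis unfolding A1_def B1_def si_def sk_def \<epsilon>2_def using pi pk pj pl
          by (elim disjE; simp add: sg_def)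
      qed simp
      have g2: "B1 * (si * (sk * (if l = k then e i j 2 else 0))) - A1 * (if k = l then si * e i j 2 else 0) = 0"
      proof (cases "k = l")
        case True thus ?thesis unfolding A1_def B1_def si_def sk_def using pi pk pj pl
          by (elim disjE; simp add: sg_def)
      qed simp
      have g3: "A1 * (si * (sk * (if j = k then e i l 2 else 0))) - B1 * (if k = j then si * e i l 2 else 0) = 0"
      proof (cases "k = j")
        case True thus ?thesis unfolding A1_def B1_def si_def sk_def using pi pk pj pl
          by (elim disjE; simp add: sg_def)
      qed simp
      have g4: "B1 * (if i = l then sk * e k j 2 else 0) - A1 * (si * (sk * (\<epsilon>1 * (if l = i then e k j 2 else 0)))) = 0"
      proof (cases "i = l")
        case True thus ?thesis unfolding A1_def B1_def si_def sk_def \<epsilon>1_def using pi pk pj pl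
          by (elim disjE; simp add: sg_def)
      qed simp
      have Z: "sg (?p j * (?p k + ?p l)) * (?T i j * ?T k l - \<epsilon>1 * (?T k l * ?T i j))
          + sg (?p j * ?p l) * sg (?p l * (?p k + ?p j)) * (?T i l * ?T k j - \<epsilon>2 * (?T k j * ?T i l)) = 0"
        unfolding S1 S2 A1_def[symmetric] B1_def[symmetric] si_def[symmetric] sk_def[symmetric] ab
        unfolding g1 g2 g3 g4 by simp
      have "Rel (\<lambda>a b c f. sg (?p c * (?p b + ?p f)) * fps_nth (?X a c * ?X b f) d) ?p i k j l
          = Rel (\<lambda>a b c f. sg (?p c * (?p b + ?p f)) * (?T a c * ?T b f)) ?p i k j l"
        using 3 unfolding prod_nth by simp
      thus ?thesis unfolding R Z .
    next
      case 4
      thus ?thesis unfolding prod_nth by (simp add: Rel_def)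
    qed
    thus "fps_nth (Rel (Yc ?p ?X) ?p i k j l) d = fps_nth 0 d" unfolding E by simp
  qed
qed


theorem proposition3p1:
  fixes m n :: nat
    and e :: "nat \<Rightarrow> nat \<Rightarrow> nat \<Rightarrow> 'a::real_algebra_1"
    and tau :: 'a
    and \<sigma> :: "nat \<Rightarrow> nat"
  assumes "m \<ge> 1"
    and "gen_rels m n e tau"
    and "\<sigma> permutes {..<m+n}"
  shows "Ber (m+n) (\<lambda>i. par m (inv \<sigma> i))
            (\<lambda>i j. oneuT m e tau (inv \<sigma> i) (inv \<sigma> j))
       = Ber (m+n) (par m) (oneuT m e tau)"
proof -
  have ip: "inv \<sigma> permutes {..<m+n}" by (rule permutes_inv[OF assms(3)])
  show ?thesis
    by (rule Ber_perm[OF UNI_oneuT SMc_oneuT[OF assms(2)] par_le1 ip])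
qed

end
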